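(* Assume Assumption (A) and the standing DDE setting. Let $U\subseteq\mathbb{C}\times\mathbb{R}$ be compact. Then there exists $C>0$ such that for all $n$ large enough and all $(\lambda,\alpha)\in U$, $\Delta_n(\lambda,\alpha)$ is defined and $$|\Delta_0(\lambda,\alpha)-\Delta_n(\lambda,\alpha)|<\frac1{\sqrt n}\Big(\frac Cn\Big)^n .$$
   Context: Notation. $X=C([-1,0],\mathbb{R})$ with the supremum norm; linear maps on $X$ are extended complex-linearly to $C([-1,0],\mathbb{C})$. For $\lambda\in\mathbb{C}$, $\varepsilon_\lambda(\theta)=e^{\lambda\theta}$, $\theta\in[-1,0]$. For each $n\in\mathbb{N}$ a mesh $-1\le\theta_n<\dots<\theta_1<\theta_0=0$ is given (the nodes may depend on $n$), with Lagrange polynomials $\ell_j(\theta)=\prod_{0\le m\le n,\,m\neq j}\frac{\theta-\theta_m}{\theta_j-\theta_m}$, $j=0,\dots,n$. $D$ is the $n\times n$ matrix with entries $D_{ij}=\ell_j'(\theta_i)$, $i,j=1,\dots,n$; $\mathbf 1=(1,\dots,1)^T\in\mathbb{R}^n$; $I$ is the identity matrix. For $y\in\mathbb{C}^n$, $Py=\sum_{j=1}^n y_j\ell_j$. For $\lambda\in\mathbb{C}$ with $D-\lambda I$ invertible, $\pi_n(\lambda):=\ell_0+P(D-\lambda I)^{-1}D\mathbf 1$. Assumption (A): with the reduced Lagrange polynomials $\tilde\ell_j(\theta)=\prod_{1\le m\le n,\,m\neq j}\frac{\theta-\theta_m}{\theta_j-\theta_m}$, $j=1,\dots,n$, the Lebesgue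 constants $\tilde\Lambda_n=\max_{\theta\in[-1,0]}\sum_{j=1}^n|\tilde\ell_j(\theta)|$ satisfy $\tilde\Lambda_n/n\to0$ as $n\to\infty$. Standing DDE setting (linear part): for $\alpha\in\mathbb{R}$, $L(\alpha):X\to\mathbb{R}$ is bounded linear and $\alpha\mapsto L(\alpha)$ is $C^k$, $k\ge3$. $\Delta_0(\lambda,\alpha)=\lambda-L(\alpha)\varepsilon_\lambda$ and $\Delta_n(\lambda,\alpha)=\lambda-L(\alpha)\pi_n(\lambda)$ (defined when $D-\lambda I$ is invertible). *)

theory Defs
  imports "HOL-Analysis.Analysis"
begin

text \<open>Elements of X are represented by functions real => real continuous on [-1,0];
 values outside [-1,0] are irrelevant (functionals are required to ignore them).\<close>

definition Xspace :: "(real \<Rightarrow> real) set" where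
  "Xspace = {f. continuous_on {-1..0} f}"

definition supnorm :: "(real \<Rightarrow> real) \<Rightarrow> real" where
  "supnorm f = (SUP t\<in>{-1..0}. \<bar>f t\<bar>)"

definition bl_functional :: "((real \<Rightarrow> real) \<Rightarrow> real) \<Rightarrow> bool" where
  "bl_functional \<Phi> \<longleftrightarrow>
     (\<forall>f\<in>Xspace. \<forall>g\<in>Xspace. \<Phi> (\<lambda>t. f t + g t) = \<Phi> f + \<Phi> g) \<and>
     (\<forall>c. \<forall>f\<in>Xspace. \<Phi> (\<lambda>t. c * f t) = c * \<Phi> f) \<and>
     (\<forall>f\<in>Xspace. \<forall>g\<in>Xspace. (\<forall>t\<in>{-1..0}. f t = g t) \<longrightarrow> \<Phi> f = \<Phi> g) \<and>
     (\<exists>M. \<forall>f\<in>Xspace. \<bar>\<Phi> f\<bar> \<le> M * supnorm f)"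

definition fnorm :: "((real \<Rightarrow> real) \<Rightarrow> real) \<Rightarrow> real" where
  "fnorm \<Phi> = (SUP f\<in>{f\<in>Xspace. supnorm f \<le> 1}. \<bar>\<Phi> f\<bar>)"

text \<open>alpha |-> L(alpha) is C^k as a map into the Banach space of bounded linear
 functionals (operator norm): there are Ls 0 = L, Ls 1, ..., Ls k, all bounded linear,
 Ls (j+1) is the (Frechet) derivative of Ls j, and Ls k is continuous.\<close>
definition Ck_family :: "nat \<Rightarrow> (real \<Rightarrow> (real \<Rightarrow> real) \<Rightarrow> real) \<Rightarrow> bool" where
  "Ck_family k L \<longleftrightarrow>
     (\<exists>Ls :: nat \<Rightarrow> real \<Rightarrow> (real \<Rightarrow> real) \<Rightarrow> real.
        Ls 0 = L \<and>
        (\<forall>j\<le>k. \<forall>\<alpha>. bl_functional (Ls j \<alpha>)) \<and>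
        (\<forall>j<k. \<forall>\<alpha>. ((\<lambda>\<beta>. fnorm (\<lambda>f. Ls j \<beta> f - Ls j \<alpha> f - (\<beta> - \<alpha>) * Ls (Suc j) \<alpha> f)
                              / \<bar>\<beta> - \<alpha>\<bar>) \<longlongrightarrow> 0) (at \<alpha>)) \<and>
        (\<forall>\<alpha>. ((\<lambda>\<beta>. fnorm (\<lambda>f. Ls k \<beta> f - Ls k \<alpha> f)) \<longlongrightarrow> 0) (at \<alpha>)))"

definition cext :: "((real \<Rightarrow> real) \<Rightarrow> real) \<Rightarrow> (real \<Rightarrow> complex) \<Rightarrow> complex" where
  "cext \<Phi> f = complex_of_real (\<Phi> (\<lambda>t. Re (f t))) + \<i> * complex_of_real (\<Phi> (\<lambda>t. Im (f t)))"

definition expf :: "complex \<Rightarrow> real \<Rightarrow> complex" where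
  "expf z t = exp (z * complex_of_real t)"

text \<open>th n j = theta_j of the n-th mesh, j = 0..n.\<close>
definition is_mesh :: "(nat \<Rightarrow> real) \<Rightarrow> nat \<Rightarrow> bool" where
  "is_mesh th n \<longleftrightarrow> th 0 = 0 \<and> -1 \<le> th n \<and> (\<forall>j<n. th (Suc j) < th j)"

definition lagr :: "(nat \<Rightarrow> nat \<Rightarrow> real) \<Rightarrow> nat \<Rightarrow> nat \<Rightarrow> real \<Rightarrow> real" where
  "lagr th n j t = (\<Prod>m\<in>{0..n} - {j}. (t - th n m) / (th n j - th n m))"

definition lagr_red :: "(nat \<Rightarrow> nat \<Rightarrow> real) \<Rightarrow> nat \<Rightarrow> nat \<Rightarrow> real \<Rightarrow> real" where
  "lagr_red th n j t = (\<Prod>m\<in>{1..n} - {j}. (t - th n m) / (th n j - th n m))"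

definition lebesgue_red :: "(nat \<Rightarrow> nat \<Rightarrow> real) \<Rightarrow> nat \<Rightarrow> real" where
  "lebesgue_red th n = (SUP t\<in>{-1..0}. \<Sum>j=1..n. \<bar>lagr_red th n j t\<bar>)"

text \<open>n x n matrices are functions nat => nat => complex, indices i,j in {1..n}.\<close>
definition Dmat :: "(nat \<Rightarrow> nat \<Rightarrow> real) \<Rightarrow> nat \<Rightarrow> nat \<Rightarrow> nat \<Rightarrow> complex" where
  "Dmat th n i j = complex_of_real (deriv (lagr th n j) (th n i))"

definition shifted :: "(nat \<Rightarrow> nat \<Rightarrow> real) \<Rightarrow> nat \<Rightarrow> complex \<Rightarrow> nat \<Rightarrow> nat \<Rightarrow> complex" where
  "shifted th n z i j = Dmat th n i j - (if i = j then z else 0)"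

definition mat_invertible :: "nat \<Rightarrow> (nat \<Rightarrow> nat \<Rightarrow> complex) \<Rightarrow> bool" where
  "mat_invertible n M \<longleftrightarrow> (\<exists>B. \<forall>i\<in>{1..n}. \<forall>j\<in>{1..n}.
      (\<Sum>k=1..n. B i k * M k j) = (if i = j then 1 else 0) \<and>
      (\<Sum>k=1..n. M i k * B k j) = (if i = j then 1 else 0))"

text \<open>y = (D - lambda I)^{-1} D 1, as the unique solution (supported on {1..n}) of
 (D - lambda I) y = D 1.\<close>
definition yvec :: "(nat \<Rightarrow> nat \<Rightarrow> real) \<Rightarrow> nat \<Rightarrow> complex \<Rightarrow> nat \<Rightarrow> complex" where
  "yvec th n z = (THE y. (\<forall>i\<in>{1..n}. (\<Sum>j=1..n. shifted th n z i j * y j) = (\<Sum>j=1..n. Dmat th n i j))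
                         \<and> (\<forall>i. i \<notin> {1..n} \<longrightarrow> y i = 0))"

definition pin :: "(nat \<Rightarrow> nat \<Rightarrow> real) \<Rightarrow> nat \<Rightarrow> complex \<Rightarrow> real \<Rightarrow> complex" where
  "pin th n z t = complex_of_real (lagr th n 0 t)
      + (\<Sum>j=1..n. yvec th n z j * complex_of_real (lagr th n j t))"

definition Delta0 :: "(real \<Rightarrow> (real \<Rightarrow> real) \<Rightarrow> real) \<Rightarrow> complex \<Rightarrow> real \<Rightarrow> complex" where
  "Delta0 L z \<alpha> = z - cext (L \<alpha>) (expf z)"

definition Deltan :: "(nat \<Rightarrow> nat \<Rightarrow> real) \<Rightarrow> (real \<Rightarrow> (real \<Rightarrow> real) \<Rightarrow> real) \<Rightarrow> nat
                       \<Rightarrow> complex \<Rightarrow> real \<Rightarrow> complex" where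
  "Deltan th L n z \<alpha> = z - cext (L \<alpha>) (pin th n z)"

end

theory Submission
  imports Defs "Jordan_Normal_Form.Determinant" "HOL-Real_Asymp.Real_Asymp"
begin



lemma poly_map_of_real:
  "poly (map_poly complex_of_real p) (complex_of_real x) = complex_of_real (poly p x)"
  by (induction p) (simp_all add: map_poly_pCons)

lemma pderiv_map_of_real:
  "pderiv (map_poly complex_of_real p) = map_poly complex_of_real (pderiv p)"
  by (intro poly_eqI) (simp add: coeff_pderiv coeff_map_poly)

lemma degree_map_of_real: "degree (map_poly complex_of_real p) = degree p"
  by (simp add: degree_map_poly)

lemma poly_zero_many_roots:
  fixes p :: "'a::idom poly"
  assumes "finite A" "card A > degree p" "\<forall>x\<in>A. poly p x = 0"
  shows "p = 0"
proof (rule ccontr)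
  assume p: "p \<noteq> 0"
  have "A \<subseteq> {x. poly p x = 0}" using assms by auto
  hence "card A \<le> card {x. poly p x = 0}"
    using poly_roots_finite[OF p] by (rule card_mono[rotated])
  also have "\<dots> \<le> degree p" by (rule card_poly_roots_bound[OF p])
  finally show False using assms by simp
qed

lemma coeff_pderiv_funpow:
  "coeff ((pderiv ^^ m) p) k = of_nat (pochhammer (k+1) m) * coeff p (k+m)"
proof (induction m arbitrary: k)
  case 0 then show ?case by simp
next
  case (Suc m)
  have "coeff ((pderiv ^^ Suc m) p) k = of_nat (Suc k) * coeff ((pderiv ^^ m) p) (Suc k)"
    by (simp add: coeff_pderiv)
  also have "\<dots> = of_nat (Suc k) * (of_nat (pochhammer (Suc k + 1) m) * coeff p (Suc k + m))"
    by (simp add: Suc)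
  also have "\<dots> = of_nat (pochhammer (k+1) (Suc m)) * coeff p (k + Suc m)"
    by (simp add: pochhammer_rec algebra_simps)
  finally show ?case .
qed

lemma poly0_pderiv_funpow:
  "poly ((pderiv ^^ m) p) 0 = fact m * coeff p m"
proof -
  have "fact m = (of_nat (pochhammer 1 m) :: 'a)" by (metis of_nat_fact pochhammer_fact)
  then show ?thesis using coeff_pderiv_funpow[of m p 0]
    by (simp add: poly_0_coeff_0)
qed

lemma degree_pderiv_funpow_le: "degree ((pderiv ^^ m) (p::complex poly)) \<le> degree p"
proof (induction m)
  case 0 then show ?case by simp
next
  case (Suc m)
  have "degree (pderiv ((pderiv ^^ m) p)) \<le> degree ((pderiv ^^ m) p)" by (simp add: degree_pderiv)
  with Suc show ?case by simp
qed

lemma smult_sum_right: "Polynomial.smult a (\<Sum>i\<in>A. f i) = (\<Sum>i\<in>A. Polynomial.smult a (f i))"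
  by (induction A rule: infinite_finite_induct) (simp_all add: smult_add_right)

lemma pderiv_funpow_zero:
  assumes "degree p < m" shows "(pderiv ^^ m) p = 0"
proof (intro poly_eqI)
  fix k show "coeff ((pderiv ^^ m) p) k = coeff 0 k"
    using assms by (simp add: coeff_pderiv_funpow coeff_eq_0)
qed

lemma pderiv_sum_poly: "pderiv (\<Sum>i\<in>A. f i) = (\<Sum>i\<in>A. pderiv (f i))"
  by (induction A rule: infinite_finite_induct) (simp_all add: pderiv_add)

text \<open>Telescoping identity behind the polynomial solution of q' - z q = A.\<close>
lemma telescope_pderiv:
  fixes A :: "complex poly"
  shows "pderiv (\<Sum>m\<le>N. Polynomial.smult (z^(N-m)) ((pderiv ^^ m) A)) - Polynomial.smult z (\<Sum>m\<le>N. Polynomial.smult (z^(N-m)) ((pderiv ^^ m) A))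
         = (pderiv ^^ Suc N) A - Polynomial.smult (z^Suc N) A"
proof (induction N)
  case 0 then show ?case by simp
next
  case (Suc N)
  define S where "S N = (\<Sum>m\<le>N. Polynomial.smult (z^(N-m)) ((pderiv ^^ m) A))" for N
  define D1 where "D1 = (pderiv ^^ Suc N) A"
  define D2 where "D2 = (pderiv ^^ Suc (Suc N)) A"
  have D2: "pderiv D1 = D2" by (simp add: D1_def D2_def)
  have "S (Suc N) = (\<Sum>m\<le>N. Polynomial.smult (z^(Suc N-m)) ((pderiv ^^ m) A)) + D1"
    unfolding S_def D1_def by (simp add: sum.atMost_Suc)
  also have "(\<Sum>m\<le>N. Polynomial.smult (z^(Suc N-m)) ((pderiv ^^ m) A)) = Polynomial.smult z (S N)"
    unfolding S_def smult_sum_right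
    by (intro sum.cong refl) (simp add: Suc_diff_le smult_smult)
  finally have S: "S (Suc N) = Polynomial.smult z (S N) + D1" .
  have IH: "pderiv (S N) - Polynomial.smult z (S N) = D1 - Polynomial.smult (z^Suc N) A"
    using Suc by (simp add: S_def D1_def)
  have "pderiv (S (Suc N)) - Polynomial.smult z (S (Suc N)) =
        Polynomial.smult z (pderiv (S N) - Polynomial.smult z (S N)) + D2 - Polynomial.smult z D1"
    unfolding S pderiv_add pderiv_smult D2 smult_diff_right smult_add_right by simp
  also have "\<dots> = D2 - Polynomial.smult (z^Suc (Suc N)) A"
    unfolding IH smult_diff_right smult_smult by (simp add: mult.commute)
  finally show ?case by (simp add: S_def D2_def)
qed




section \<open>Meshes and Lagrange polynomials\<close>

lemma mesh_strict:
  assumes "is_mesh a n" "i < j" "j \<le> n" shows "a j < a i"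
  using assms(2,3)
proof (induction j)
  case 0 then show ?case by simp
next
  case (Suc j)
  have s: "a (Suc j) < a j" using assms(1) Suc.prems unfolding is_mesh_def by auto
  show ?case
  proof (cases "i = j")
    case True then show ?thesis using s by simp
  next
    case False then have "a j < a i" using Suc by simp
    then show ?thesis using s by simp
  qed
qed

lemma mesh_inj: assumes "is_mesh a n" shows "inj_on a {0..n}"
proof (rule inj_onI)
  fix i j assume ij: "i \<in> {0..n}" "j \<in> {0..n}" "a i = a j"
  show "i = j"
  proof (rule ccontr)
    assume "i \<noteq> j"
    then consider "i < j" | "j < i" by linarith
    then show False using mesh_strict[OF assms, of i j] mesh_strict[OF assms, of j i] ij by force
  qed
qed

lemma mesh_range: assumes "is_mesh a n" "i \<le> n" shows "-1 \<le> a i" "a i \<le> 0"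
proof -
  have "a n \<le> a i" using mesh_strict[OF assms(1), of i n] assms(2) by (cases "i = n") auto
  then show "-1 \<le> a i" using assms(1) unfolding is_mesh_def by simp
  have "a i \<le> a 0" using mesh_strict[OF assms(1), of 0 i] assms(2) by (cases "i = 0") auto
  then show "a i \<le> 0" using assms(1) unfolding is_mesh_def by simp
qed

definition lr :: "(nat \<Rightarrow> real) \<Rightarrow> nat \<Rightarrow> nat \<Rightarrow> real poly" where
  "lr a n j = (\<Prod>m\<in>{0..n}-{j}. Polynomial.smult (1/(a j - a m)) [:-a m, 1:])"

definition lc :: "(nat \<Rightarrow> real) \<Rightarrow> nat \<Rightarrow> nat \<Rightarrow> complex poly" where
  "lc a n j = map_poly complex_of_real (lr a n j)"

abbreviation tt :: "(nat \<Rightarrow> real) \<Rightarrow> nat \<Rightarrow> complex" where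
  "tt a i \<equiv> complex_of_real (a i)"

lemma lagr_eq: "lagr th n j = (\<lambda>x. poly (lr (th n) n j) x)"
  unfolding lagr_def lr_def poly_prod by (intro ext prod.cong refl) (simp add: diff_divide_distrib)

lemma degree_lr: assumes "j \<le> n" shows "degree (lr a n j) \<le> n"
proof -
  have d1: "\<forall>m. degree (Polynomial.smult (1/(a j - a m)) [:-a m, 1:]) \<le> 1"
    by (intro allI le_trans[OF degree_smult_le]) simp
  have "degree (lr a n j) \<le> sum (degree \<circ> (\<lambda>m. Polynomial.smult (1/(a j - a m)) [:-a m, 1:])) ({0..n}-{j})"
    unfolding lr_def by (rule degree_prod_sum_le) simp
  also have "\<dots> \<le> (\<Sum>m\<in>{0..n}-{j}. 1)" by (intro sum_mono) (use d1 in simp)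
  also have "\<dots> = n" using assms by simp
  finally show ?thesis .
qed

lemma degree_lc: assumes "j \<le> n" shows "degree (lc a n j) \<le> n"
  using degree_lr[OF assms] by (simp add: lc_def degree_map_of_real)

lemma lr_nodes:
  assumes "is_mesh a n" "i \<le> n" "j \<le> n"
  shows "poly (lr a n j) (a i) = (if i = j then 1 else 0)"
proof (cases "i = j")
  case True
  have "poly (lr a n j) (a i) = (\<Prod>m\<in>{0..n}-{j}. 1)"
    unfolding lr_def poly_prod
  proof (intro prod.cong refl)
    fix m assume m: "m \<in> {0..n}-{j}"
    then have "a j \<noteq> a m" using mesh_inj[OF assms(1)] assms(3) True
      by (metis DiffE atLeastAtMost_iff inj_on_contraD insertI1 le0)
    then show "poly (Polynomial.smult (1 / (a j - a m)) [:- a m, 1:]) (a i) = 1"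
      using True by (simp add: diff_divide_distrib[symmetric])
  qed
  then show ?thesis using True by simp
next
  case False
  have "poly (lr a n j) (a i) = 0"
    unfolding lr_def poly_prod
    by (rule prod_zero) (use False assms in \<open>auto intro!: bexI[of _ i]\<close>)
  then show ?thesis using False by simp
qed

lemma lc_nodes:
  assumes "is_mesh a n" "i \<le> n" "j \<le> n"
  shows "poly (lc a n j) (tt a i) = (if i = j then 1 else 0)"
  using lr_nodes[OF assms] by (simp add: lc_def poly_map_of_real)

lemma lc_real: "poly (lc a n j) (complex_of_real x) = complex_of_real (poly (lr a n j) x)"
  by (simp add: lc_def poly_map_of_real)

lemma interp:
  fixes q :: "complex poly"
  assumes "is_mesh a n" "degree q \<le> n"
  shows "q = (\<Sum>j=0..n. Polynomial.smult (poly q (tt a j)) (lc a n j))"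
proof -
  define r where "r = q - (\<Sum>j=0..n. Polynomial.smult (poly q (tt a j)) (lc a n j))"
  have "degree (\<Sum>j=0..n. Polynomial.smult (poly q (tt a j)) (lc a n j)) \<le> n"
    by (intro degree_sum_le) (simp_all add: degree_lc)
  then have dr: "degree r \<le> n" unfolding r_def using assms(2) degree_diff_le by blast
  have inj: "inj_on (tt a) {0..n}" using mesh_inj[OF assms(1)] by (auto simp: inj_on_def)
  have "r = 0"
  proof (rule poly_zero_many_roots[of "tt a ` {0..n}"])
    show "finite (tt a ` {0..n})" by simp
    show "degree r < card (tt a ` {0..n})" using dr card_image[OF inj] by simp
    show "\<forall>x\<in>tt a ` {0..n}. poly r x = 0"
    proof
      fix x assume "x \<in> tt a ` {0..n}"
      then obtain i where i: "i \<le> n" "x = tt a i" by auto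
      have "(\<Sum>j=0..n. poly q (tt a j) * poly (lc a n j) (tt a i)) = (\<Sum>j=0..n. if j = i then poly q (tt a i) else 0)"
        by (intro sum.cong refl) (auto simp: lc_nodes[OF assms(1) i(1)])
      also have "\<dots> = poly q (tt a i)" using i by simp
      finally show "poly r x = 0" unfolding r_def i(2) by (simp add: poly_sum)
    qed
  qed
  then show ?thesis unfolding r_def by simp
qed

lemma sum_lc: assumes "is_mesh a n" shows "(\<Sum>j=0..n. lc a n j) = 1"
  using interp[OF assms, of 1] by simp

lemma Dmat_eq: "Dmat th n i j = poly (pderiv (lc (th n) n j)) (tt (th n) i)"
proof -
  have "deriv (lagr th n j) (th n i) = poly (pderiv (lr (th n) n j)) (th n i)"
    unfolding lagr_eq by (rule DERIV_imp_deriv) (rule poly_DERIV)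
  then show ?thesis unfolding Dmat_def lc_def pderiv_map_of_real poly_map_of_real by simp
qed

section \<open>The node polynomial\<close>

definition om :: "(nat \<Rightarrow> real) \<Rightarrow> nat \<Rightarrow> complex poly" where
  "om a n = (\<Prod>i\<in>{1..n}. [:- tt a i, 1:])"

lemma prod_linear_facts:
  fixes x :: "nat \<Rightarrow> real"
  assumes "finite I" "\<forall>i\<in>I. 0 \<le> x i \<and> x i \<le> 1"
  shows "degree (\<Prod>i\<in>I. [:complex_of_real (x i), 1:]) \<le> card I \<and>
         coeff (\<Prod>i\<in>I. [:complex_of_real (x i), 1:]) (card I) = 1 \<and>
         (\<forall>m. \<exists>r. coeff (\<Prod>i\<in>I. [:complex_of_real (x i), 1:]) m = complex_of_real r \<and> 0 \<le> r \<and> r \<le> real (card I choose m))"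
  using assms
proof (induction I rule: finite_induct)
  case empty
  show ?case
  proof (intro conjI allI)
    fix m show "\<exists>r. coeff (\<Prod>i\<in>{}. [:complex_of_real (x i), 1:]) m = complex_of_real r \<and> 0 \<le> r \<and> r \<le> real (card {} choose m)"
      by (cases m) (auto intro!: exI[of _ 1] exI[of _ 0])
  qed simp_all
next
  case (insert i I)
  define P where "P = (\<Prod>i\<in>I. [:complex_of_real (x i), 1:])"
  define c where "c = complex_of_real (x i)"
  have IH: "degree P \<le> card I" "coeff P (card I) = 1"
    "\<forall>m. \<exists>r. coeff P m = complex_of_real r \<and> 0 \<le> r \<and> r \<le> real (card I choose m)"
    using insert by (auto simp: P_def)
  have eq: "(\<Prod>i\<in>insert i I. [:complex_of_real (x i), 1:]) = Polynomial.smult c P + pCons 0 P"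
    using insert(1,2) by (simp add: P_def c_def)
  have ci: "card (insert i I) = Suc (card I)" using insert(1,2) by simp
  have deg: "degree (Polynomial.smult c P + pCons 0 P) \<le> Suc (card I)"
    by (rule degree_add_le) (use IH(1) degree_smult_le le_trans in \<open>auto simp: degree_pCons_le\<close>)
  have co: "coeff (Polynomial.smult c P + pCons 0 P) m = c * coeff P m + (case m of 0 \<Rightarrow> 0 | Suc k \<Rightarrow> coeff P k)" for m
    by (simp add: coeff_pCons)
  have top: "coeff P (Suc (card I)) = 0" using IH(1) by (simp add: coeff_eq_0)
  have xi: "0 \<le> x i" "x i \<le> 1" using insert.prems by auto
  show ?case unfolding eq ci
  proof (intro conjI allI)
    show "degree (Polynomial.smult c P + pCons 0 P) \<le> Suc (card I)" by (rule deg)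
    show "coeff (Polynomial.smult c P + pCons 0 P) (Suc (card I)) = 1" using co top IH(2) by simp
    fix m
    obtain r1 where r1: "coeff P m = complex_of_real r1" "0 \<le> r1" "r1 \<le> real (card I choose m)"
      using IH(3) by blast
    show "\<exists>r. coeff (Polynomial.smult c P + pCons 0 P) m = complex_of_real r \<and> 0 \<le> r \<and> r \<le> real (Suc (card I) choose m)"
    proof (cases m)
      case 0
      then show ?thesis using r1 xi
        by (intro exI[of _ "x i * r1"]) (auto simp: co c_def intro: mult_le_one)
    next
      case (Suc k)
      obtain r2 where r2: "coeff P k = complex_of_real r2" "0 \<le> r2" "r2 \<le> real (card I choose k)"
        using IH(3) by blast
      have "x i * r1 \<le> real (card I choose m)" using mult_left_le_one_le[of r1 "x i"] r1 xi by linarith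
      then have "x i * r1 + r2 \<le> real (Suc (card I) choose m)"
        using r2 Suc by simp
      then show ?thesis using r1 r2 xi Suc
        by (intro exI[of _ "x i * r1 + r2"]) (auto simp: co c_def)
    qed
  qed
qed

lemma om_facts:
  assumes "is_mesh a n"
  shows "degree (om a n) \<le> n" "coeff (om a n) n = 1"
    "\<forall>m. \<exists>r. coeff (om a n) m = complex_of_real r \<and> 0 \<le> r \<and> r \<le> real (n choose m)"
proof -
  have e: "om a n = (\<Prod>i\<in>{1..n}. [:complex_of_real (- a i), 1:])" unfolding om_def by simp
  have "\<forall>i\<in>{1..n}. 0 \<le> - a i \<and> - a i \<le> 1" using mesh_range[OF assms] by force
  from prod_linear_facts[OF _ this] show "degree (om a n) \<le> n" "coeff (om a n) n = 1"
    "\<forall>m. \<exists>r. coeff (om a n) m = complex_of_real r \<and> 0 \<le> r \<and> r \<le> real (n choose m)"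
    unfolding e by auto
qed

lemma om_nodes: assumes "i \<in> {1..n}" shows "poly (om a n) (tt a i) = 0"
  unfolding om_def poly_prod using assms by (intro prod_zero) (auto intro!: bexI[of _ i])




section \<open>Invertibility from trivial kernel\<close>

lemma sum_shift1: "(\<Sum>k=1..n. f k) = (\<Sum>k<n. f (Suc k))"
  by (induction n) simp_all

definition kerP :: "nat \<Rightarrow> (nat \<Rightarrow> nat \<Rightarrow> complex) \<Rightarrow> bool" where
  "kerP n M \<longleftrightarrow> (\<forall>y. (\<forall>i\<in>{1..n}. (\<Sum>j=1..n. M i j * y j) = 0) \<longrightarrow> (\<forall>j\<in>{1..n}. y j = 0))"

lemma kerP_invertible:
  assumes "kerP n M" shows "mat_invertible n M"
proof -
  define A where "A = mat n n (\<lambda>(i,j). M (Suc i) (Suc j))"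
  have A: "A \<in> carrier_mat n n" unfolding A_def by simp
  have "Determinant.det A \<noteq> 0"
  proof
    assume "Determinant.det A = 0"
    then obtain v where v: "v \<in> carrier_vec n" "v \<noteq> 0\<^sub>v n" "A *\<^sub>v v = 0\<^sub>v n"
      using det_0_iff_vec_prod_zero_field[OF A] by auto
    define y where "y j = v $ (j - 1)" for j
    have "\<forall>i\<in>{1..n}. (\<Sum>j=1..n. M i j * y j) = 0"
    proof
      fix i assume i: "i \<in> {1..n}"
      then have "(A *\<^sub>v v) $ (i - 1) = 0" using v(3) by auto
      moreover have "(A *\<^sub>v v) $ (i - 1) = (\<Sum>j<n. M i (Suc j) * y (Suc j))"
      proof -
        have il: "i - 1 < n" "Suc (i - 1) = i" using i by auto
        show ?thesis using il v(1) by (simp add: A_def scalar_prod_def y_def lessThan_atLeast0)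
      qed
      ultimately show "(\<Sum>j=1..n. M i j * y j) = 0" unfolding sum_shift1 by simp
    qed
    then have "\<forall>j\<in>{1..n}. y j = 0" using assms unfolding kerP_def by blast
    then have yz: "v $ k = 0" if "k < n" for k
    proof -
      have "Suc k \<in> {1..n}" using that by auto
      then have "y (Suc k) = 0" using \<open>\<forall>j\<in>{1..n}. y j = 0\<close> by blast
      then show ?thesis by (simp add: y_def)
    qed
    have "v = 0\<^sub>v n" using v(1) by (intro eq_vecI) (auto simp: yz)
    then show False using v(2) by simp
  qed
  from det_non_zero_imp_unit[OF A this, of "()"]
  obtain B where B: "B \<in> carrier_mat n n" "B * A = 1\<^sub>m n" "A * B = 1\<^sub>m n"
    unfolding Units_def ring_mat_def by auto
  define B' where "B' i j = B $$ (i - 1, j - 1)" for i j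
  show ?thesis unfolding mat_invertible_def
  proof (intro exI[of _ B'] ballI conjI)
    fix i j assume i: "i \<in> {1..n}" and j: "j \<in> {1..n}"
    have il: "i - 1 < n" "Suc (i - 1) = i" "j - 1 < n" "Suc (j - 1) = j" "(i - 1 = j - 1) = (i = j)" using i j by auto
    have "(B * A) $$ (i - 1, j - 1) = (\<Sum>k<n. B' i (Suc k) * M (Suc k) j)"
      using il B(1) by (simp add: A_def scalar_prod_def B'_def lessThan_atLeast0)
    then show "(\<Sum>k=1..n. B' i k * M k j) = (if i = j then 1 else 0)"
      unfolding sum_shift1 using B(2) il by auto
    have "(A * B) $$ (i - 1, j - 1) = (\<Sum>k<n. M i (Suc k) * B' (Suc k) j)"
      using il B(1) by (simp add: A_def scalar_prod_def B'_def lessThan_atLeast0)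
    then show "(\<Sum>k=1..n. M i k * B' k j) = (if i = j then 1 else 0)"
      unfolding sum_shift1 using B(3) il by auto
  qed
qed

section \<open>Polynomial ODE facts\<close>

lemma pderiv_eq_smult_zero:
  fixes V :: "complex poly"
  assumes "z \<noteq> 0" "pderiv V = Polynomial.smult z V" shows "V = 0"
proof (rule ccontr)
  assume V: "V \<noteq> 0"
  show False
  proof (cases "degree V = 0")
    case True
    then have "pderiv V = 0" by (simp add: pderiv_eq_0_iff)
    then show False using assms V by simp
  next
    case False
    have "degree (pderiv V) = degree V - 1" by (rule degree_pderiv)
    moreover have "degree (Polynomial.smult z V) = degree V" using assms(1) by simp
    ultimately show False using assms(2) False by simp
  qed
qed

lemma funpow_pderiv_smult: "(pderiv ^^ m) (Polynomial.smult c p) = Polynomial.smult c ((pderiv ^^ m) p)"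
  by (induction m) (simp_all add: pderiv_smult)

definition SS :: "nat \<Rightarrow> complex \<Rightarrow> complex poly \<Rightarrow> complex poly" where
  "SS N z A = (\<Sum>m\<le>N. Polynomial.smult (z^(N-m)) ((pderiv ^^ m) A))"

lemma SS_ode:
  assumes "degree A \<le> N"
  shows "pderiv (SS N z A) - Polynomial.smult z (SS N z A) = - Polynomial.smult (z^Suc N) A"
  using telescope_pderiv[where N=N and z=z and A=A] pderiv_funpow_zero[of A "Suc N"] assms unfolding SS_def by simp

lemma degree_SS: assumes "degree A \<le> N" shows "degree (SS N z A) \<le> N"
  unfolding SS_def
  by (intro degree_sum_le) (auto intro: le_trans[OF degree_smult_le] le_trans[OF degree_pderiv_funpow_le assms])

lemma SS_smult: "SS N z (Polynomial.smult c A) = Polynomial.smult c (SS N z A)"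
  unfolding SS_def by (simp add: funpow_pderiv_smult smult_sum_right smult_smult mult.commute)

lemma ode_poly:
  fixes Q :: "complex poly"
  assumes "z \<noteq> 0" "degree Q \<le> n"
  shows "Polynomial.smult (z^Suc n) Q = - SS n z (pderiv Q - Polynomial.smult z Q)"
proof -
  define R where "R = pderiv Q - Polynomial.smult z Q"
  have dR: "degree R \<le> n" unfolding R_def using assms(2)
    by (intro degree_diff_le) (auto simp: degree_pderiv intro: le_trans[OF degree_smult_le])
  define V where "V = SS n z R + Polynomial.smult (z^Suc n) Q"
  have "pderiv V = Polynomial.smult z V"
  proof -
    have "pderiv V - Polynomial.smult z V = (pderiv (SS n z R) - Polynomial.smult z (SS n z R))
            + Polynomial.smult (z^Suc n) R"
      unfolding V_def R_def by (simp add: pderiv_add pderiv_smult smult_add_right smult_diff_right algebra_simps)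
    also have "\<dots> = 0" using SS_ode[OF dR] by simp
    finally show ?thesis by simp
  qed
  then have "V = 0" using pderiv_eq_smult_zero assms(1) by blast
  then show ?thesis unfolding V_def R_def by (simp add: eq_neg_iff_add_eq_0 add.commute)
qed

section \<open>The characteristic sum T\<close>

definition Tn :: "(nat \<Rightarrow> real) \<Rightarrow> nat \<Rightarrow> complex \<Rightarrow> complex" where
  "Tn a n z = poly (SS n z (om a n)) 0"

lemma Tn_coeff: "Tn a n z = (\<Sum>m\<le>n. z^(n-m) * (fact m * coeff (om a n) m))"
  unfolding Tn_def SS_def by (simp add: poly_sum poly0_pderiv_funpow)




definition PY :: "(nat \<Rightarrow> nat \<Rightarrow> real) \<Rightarrow> nat \<Rightarrow> (nat \<Rightarrow> complex) \<Rightarrow> complex poly" where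
  "PY th n y = (\<Sum>j=1..n. Polynomial.smult (y j) (lc (th n) n j))"

lemma degree_PY: "degree (PY th n y) \<le> n"
  unfolding PY_def by (intro degree_sum_le) (auto intro: le_trans[OF degree_smult_le] degree_lc)

lemma poly_PY_node:
  assumes "is_mesh (th n) n" "i \<le> n"
  shows "poly (PY th n y) (tt (th n) i) = (if i \<in> {1..n} then y i else 0)"
proof -
  have "poly (PY th n y) (tt (th n) i) = (\<Sum>j=1..n. if j = i then y j else 0)"
    unfolding PY_def poly_sum by (intro sum.cong refl) (auto simp: lc_nodes[where a="th n" and n=n, OF assms])
  then show ?thesis by simp
qed

lemma poly_PY_0:
  assumes "is_mesh (th n) n" shows "poly (PY th n y) 0 = 0"
proof -
  have "th n 0 = 0" using assms by (simp add: is_mesh_def)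
  then show ?thesis using poly_PY_node[where th=th and n=n and i=0 and y=y, OF assms] by simp
qed

lemma shifted_sum:
  assumes "is_mesh (th n) n" "i \<in> {1..n}"
  shows "(\<Sum>j=1..n. shifted th n z i j * y j) =
         poly (pderiv (PY th n y) - Polynomial.smult z (PY th n y)) (tt (th n) i)"
proof -
  have "(\<Sum>j=1..n. shifted th n z i j * y j) = (\<Sum>j=1..n. Dmat th n i j * y j) - (\<Sum>j=1..n. if i = j then z * y j else 0)"
    unfolding shifted_def sum_subtractf[symmetric] by (intro sum.cong refl) (auto simp: algebra_simps)
  also have "(\<Sum>j=1..n. if i = j then z * y j else 0) = z * y i" using assms(2) by simp
  also have "(\<Sum>j=1..n. Dmat th n i j * y j) = poly (pderiv (PY th n y)) (tt (th n) i)"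
    unfolding PY_def pderiv_sum_poly poly_sum Dmat_eq by (simp add: pderiv_smult mult.commute)
  finally show ?thesis using poly_PY_node[where th=th and n=n and i=i and y=y, OF assms(1)] assms(2) by simp
qed

lemma R_is_om:
  assumes "is_mesh (th n) n" "degree R \<le> n" "\<forall>i\<in>{1..n}. poly R (tt (th n) i) = 0"
  shows "R = Polynomial.smult (coeff R n) (om (th n) n)"
proof -
  define E where "E = R - Polynomial.smult (coeff R n) (om (th n) n)"
  have dE: "degree E \<le> n" unfolding E_def using assms(2) om_facts(1)[OF assms(1)]
    by (intro degree_diff_le) (auto intro: le_trans[OF degree_smult_le])
  have cE: "coeff E n = 0" unfolding E_def using om_facts(2)[OF assms(1)] by simp
  have inj: "inj_on (tt (th n)) {1..n}" using mesh_inj[OF assms(1)] by (auto simp: inj_on_def)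
  show ?thesis
  proof (cases "E = 0")
    case True then show ?thesis by (simp add: E_def)
  next
    case False
    have "degree E \<noteq> n" using cE False by (metis leading_coeff_0_iff)
    with dE have dlt: "degree E < n" by simp
    have "E = 0"
    proof (rule poly_zero_many_roots[of "tt (th n) ` {1..n}"])
      show "finite (tt (th n) ` {1..n})" by simp
      show "degree E < card (tt (th n) ` {1..n})" using dlt card_image[OF inj] by simp
      show "\<forall>x\<in>tt (th n) ` {1..n}. poly E x = 0"
        using assms(3) om_nodes by (auto simp: E_def)
    qed
    then show ?thesis using False by simp
  qed
qed

lemma kernel:
  assumes mesh: "is_mesh (th n) n" and zT: "z = 0 \<or> Tn (th n) n z \<noteq> 0"
  shows "kerP n (shifted th n z)"
  unfolding kerP_def
proof (intro allI impI)
  fix y assume hy: "\<forall>i\<in>{1..n}. (\<Sum>j=1..n. shifted th n z i j * y j) = 0"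
  define Q where "Q = PY th n y"
  define R where "R = pderiv Q - Polynomial.smult z Q"
  have dQ: "degree Q \<le> n" by (simp add: Q_def degree_PY)
  have dR: "degree R \<le> n" unfolding R_def using dQ
    by (intro degree_diff_le) (auto simp: degree_pderiv intro: le_trans[OF degree_smult_le])
  have Rz: "\<forall>i\<in>{1..n}. poly R (tt (th n) i) = 0"
    using hy shifted_sum[where th=th and n=n and z=z and y=y, OF mesh] by (simp add: R_def Q_def)
  have Q0: "poly Q 0 = 0" by (simp add: Q_def poly_PY_0[where th=th and n=n, OF mesh])
  have "Q = 0"
  proof (cases "z = 0")
    case True
    have "pderiv Q = 0"
    proof (cases "n = 0")
      case True then have "degree Q = 0" using dQ by simp
      then show ?thesis by (simp add: pderiv_eq_0_iff)
    next
      case False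
      have inj: "inj_on (tt (th n)) {1..n}" using mesh_inj[OF mesh] by (auto simp: inj_on_def)
      show ?thesis
      proof (rule poly_zero_many_roots[of "tt (th n) ` {1..n}"])
        show "finite (tt (th n) ` {1..n})" by simp
        show "degree (pderiv Q) < card (tt (th n) ` {1..n})"
          using dQ False card_image[OF inj] by (simp add: degree_pderiv)
        show "\<forall>x\<in>tt (th n) ` {1..n}. poly (pderiv Q) x = 0" using Rz True by (auto simp: R_def)
      qed
    qed
    then have "degree Q = 0" by (simp add: pderiv_eq_0_iff)
    then have "Q = [:poly Q 0:]" by (auto elim!: degree_eq_zeroE)
    then show ?thesis using Q0 by simp
  next
    case False
    then have T: "Tn (th n) n z \<noteq> 0" using zT by simp
    have Req: "R = Polynomial.smult (coeff R n) (om (th n) n)" by (rule R_is_om[where th=th and n=n, OF mesh dR Rz])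
    have ode: "Polynomial.smult (z^Suc n) Q = - SS n z R" using ode_poly[OF False dQ] by (simp add: R_def)
    have "poly (SS n z R) 0 = coeff R n * Tn (th n) n z"
      by (subst Req) (simp add: SS_smult Tn_def)
    moreover have "poly (SS n z R) 0 = 0" using arg_cong[OF ode, of "\<lambda>p. poly p 0"] Q0 by simp
    ultimately have "coeff R n = 0" using T by simp
    then have "R = 0" using Req by simp
    then have "Polynomial.smult (z^Suc n) Q = 0" using ode by (simp add: SS_def)
    then show ?thesis using False by simp
  qed
  show "\<forall>j\<in>{1..n}. y j = 0"
  proof
    fix j assume j: "j \<in> {1..n}"
    have "y j = poly Q (tt (th n) j)" using poly_PY_node[where th=th and n=n and i=j and y=y, OF mesh] j by (simp add: Q_def)
    then show "y j = 0" using \<open>Q = 0\<close> by simp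
  qed
qed




lemma sol:
  assumes mesh: "is_mesh (th n) n" and ker: "kerP n (shifted th n z)"
    and dp: "degree p \<le> n" and p0: "poly p 0 = 1"
    and pz: "\<forall>i\<in>{1..n}. poly (pderiv p - Polynomial.smult z p) (tt (th n) i) = 0"
  shows "yvec th n z = (\<lambda>j. if j \<in> {1..n} then poly p (tt (th n) j) else 0)"
    and "pin th n z x = poly p (complex_of_real x)"
proof -
  define y0 where "y0 = (\<lambda>j. if j \<in> {1..n} then poly p (tt (th n) j) else 0)"
  have th0: "th n 0 = 0" using mesh by (simp add: is_mesh_def)
  have "p = (\<Sum>j=0..n. Polynomial.smult (poly p (tt (th n) j)) (lc (th n) n j))"
    by (rule interp[OF mesh dp])
  also have "\<dots> = Polynomial.smult (poly p (tt (th n) 0)) (lc (th n) n 0) +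
                  (\<Sum>j=Suc 0..n. Polynomial.smult (poly p (tt (th n) j)) (lc (th n) n j))"
    by (rule sum.atLeast_Suc_atMost) simp
  also have "(\<Sum>j=Suc 0..n. Polynomial.smult (poly p (tt (th n) j)) (lc (th n) n j)) = PY th n y0"
    unfolding PY_def y0_def by (intro sum.cong) auto
  finally have pdec: "p = lc (th n) n 0 + PY th n y0" using p0 th0 by simp
  have Dsum: "(\<Sum>j=1..n. Dmat th n i j) = - poly (pderiv (lc (th n) n 0)) (tt (th n) i)" for i
  proof -
    have "(\<Sum>j=0..n. lc (th n) n j) = lc (th n) n 0 + (\<Sum>j=Suc 0..n. lc (th n) n j)"
      by (rule sum.atLeast_Suc_atMost) simp
    then have "(\<Sum>j=1..n. lc (th n) n j) = 1 - lc (th n) n 0" using sum_lc[OF mesh]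
      by (simp, metis add_diff_cancel_left')
    then have "pderiv (\<Sum>j=1..n. lc (th n) n j) = - pderiv (lc (th n) n 0)" by (simp add: pderiv_diff)
    then show ?thesis unfolding Dmat_eq poly_sum[symmetric] pderiv_sum_poly[symmetric] by simp
  qed
  have y0sol: "(\<forall>i\<in>{1..n}. (\<Sum>j=1..n. shifted th n z i j * y0 j) = (\<Sum>j=1..n. Dmat th n i j))
               \<and> (\<forall>i. i \<notin> {1..n} \<longrightarrow> y0 i = 0)"
  proof (intro conjI ballI allI impI)
    fix i assume i: "i \<in> {1..n}"
    have l0: "poly (lc (th n) n 0) (tt (th n) i) = 0" using lc_nodes[where a="th n" and n=n and i=i and j=0, OF mesh] i by simp
    have PYe: "PY th n y0 = p - lc (th n) n 0" using pdec by simp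
    have "(\<Sum>j=1..n. shifted th n z i j * y0 j) =
       poly (pderiv (p - lc (th n) n 0) - Polynomial.smult z (p - lc (th n) n 0)) (tt (th n) i)"
      using shifted_sum[where th=th and n=n and z=z and y=y0, OF mesh i] unfolding PYe .
    also have "\<dots> = poly (pderiv p - Polynomial.smult z p) (tt (th n) i) - poly (pderiv (lc (th n) n 0)) (tt (th n) i)
          + z * poly (lc (th n) n 0) (tt (th n) i)"
      by (simp add: pderiv_diff algebra_simps)
    also have "\<dots> = (\<Sum>j=1..n. Dmat th n i j)" using pz i l0 Dsum by simp
    finally show "(\<Sum>j=1..n. shifted th n z i j * y0 j) = (\<Sum>j=1..n. Dmat th n i j)" .
  next
    fix i assume "i \<notin> {1..n}" then show "y0 i = 0" unfolding y0_def by auto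
  qed
  have yv: "yvec th n z = y0"
    unfolding yvec_def
  proof (rule the_equality)
    show "(\<forall>i\<in>{1..n}. (\<Sum>j=1..n. shifted th n z i j * y0 j) = (\<Sum>j=1..n. Dmat th n i j))
               \<and> (\<forall>i. i \<notin> {1..n} \<longrightarrow> y0 i = 0)" by (rule y0sol)
    fix y assume hy: "(\<forall>i\<in>{1..n}. (\<Sum>j=1..n. shifted th n z i j * y j) = (\<Sum>j=1..n. Dmat th n i j))
               \<and> (\<forall>i. i \<notin> {1..n} \<longrightarrow> y i = 0)"
    have "\<forall>i\<in>{1..n}. (\<Sum>j=1..n. shifted th n z i j * (y j - y0 j)) = 0"
    proof
      fix i assume i: "i \<in> {1..n}"
      have "(\<Sum>j=1..n. shifted th n z i j * (y j - y0 j)) =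
            (\<Sum>j=1..n. shifted th n z i j * y j) - (\<Sum>j=1..n. shifted th n z i j * y0 j)"
        by (simp add: right_diff_distrib sum_subtractf)
      then show "(\<Sum>j=1..n. shifted th n z i j * (y j - y0 j)) = 0" using hy y0sol i by simp
    qed
    then have "\<forall>j\<in>{1..n}. y j - y0 j = 0"
      using spec[OF ker[unfolded kerP_def], of "\<lambda>j. y j - y0 j"] by simp
    then show "y = y0" using hy y0sol by (intro ext) (metis eq_iff_diff_eq_0)
  qed
  then show "yvec th n z = (\<lambda>j. if j \<in> {1..n} then poly p (tt (th n) j) else 0)" by (simp add: y0_def)
  have lg: "complex_of_real (lagr th n j x) = poly (lc (th n) n j) (complex_of_real x)" for j
    by (simp add: lagr_eq lc_real)
  show "pin th n z x = poly p (complex_of_real x)"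
    unfolding pin_def yv lg
    using arg_cong[OF pdec, of "\<lambda>q. poly q (complex_of_real x)"] by (simp add: PY_def poly_sum)
qed

definition psol :: "(nat \<Rightarrow> nat \<Rightarrow> real) \<Rightarrow> nat \<Rightarrow> complex \<Rightarrow> complex poly" where
  "psol th n z = (if z = 0 then 1 else Polynomial.smult (1 / Tn (th n) n z) (SS n z (om (th n) n)))"

lemma psol_facts:
  assumes mesh: "is_mesh (th n) n" and zT: "z = 0 \<or> Tn (th n) n z \<noteq> 0"
  shows "degree (psol th n z) \<le> n" "poly (psol th n z) 0 = 1"
    "pderiv (psol th n z) - Polynomial.smult z (psol th n z) =
       Polynomial.smult (if z = 0 then 0 else - (z^Suc n) / Tn (th n) n z) (om (th n) n)"
proof -
  have dom: "degree (om (th n) n) \<le> n" by (rule om_facts(1)[OF mesh])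
  show "degree (psol th n z) \<le> n"
    unfolding psol_def using degree_SS[OF dom] by (auto intro: le_trans[OF degree_smult_le])
  show "poly (psol th n z) 0 = 1"
    unfolding psol_def using zT by (auto simp: Tn_def)
  show "pderiv (psol th n z) - Polynomial.smult z (psol th n z) =
       Polynomial.smult (if z = 0 then 0 else - (z^Suc n) / Tn (th n) n z) (om (th n) n)"
  proof (cases "z = 0")
    case True then show ?thesis by (simp add: psol_def)
  next
    case False
    have "pderiv (psol th n z) - Polynomial.smult z (psol th n z) =
          Polynomial.smult (1 / Tn (th n) n z) (pderiv (SS n z (om (th n) n)) - Polynomial.smult z (SS n z (om (th n) n)))"
      using False by (simp add: psol_def pderiv_smult smult_diff_right smult_smult mult.commute)
    also have "\<dots> = Polynomial.smult (- (z^Suc n) / Tn (th n) n z) (om (th n) n)"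
      unfolding SS_ode[OF dom] by (simp add: smult_smult)
    finally show ?thesis using False by simp
  qed
qed

lemma main_fixed_n:
  assumes mesh: "is_mesh (th n) n" and zT: "z = 0 \<or> Tn (th n) n z \<noteq> 0"
  shows "mat_invertible n (shifted th n z)" "pin th n z x = poly (psol th n z) (complex_of_real x)"
proof -
  have ker: "kerP n (shifted th n z)" by (rule kernel[where th=th and n=n and z=z, OF mesh zT])
  then show "mat_invertible n (shifted th n z)" by (rule kerP_invertible)
  have pz: "\<forall>i\<in>{1..n}. poly (pderiv (psol th n z) - Polynomial.smult z (psol th n z)) (tt (th n) i) = 0"
    unfolding psol_facts(3)[where th=th and n=n and z=z, OF mesh zT] by (simp add: om_nodes)
  show "pin th n z x = poly (psol th n z) (complex_of_real x)"
    by (rule sol(2)[where th=th and n=n and z=z, OF mesh ker psol_facts(1,2)[where th=th and n=n and z=z, OF mesh zT] pz])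
qed




lemma fact_ratio:
  assumes "m \<le> n" shows "(real n)^m * fact n \<le> fact m * (real n)^n"
proof -
  have d: "fact n div fact m \<le> n^(n-m)" using fact_div_fact_le_pow[of "n-m" n] assms by simp
  have "fact m dvd (fact n :: nat)" using assms by (simp add: fact_dvd)
  then have e: "(fact n :: nat) = fact m * (fact n div fact m)" by simp
  have "(fact n :: real) = fact m * real (fact n div fact m)"
    using arg_cong[OF e, of real] by (simp only: of_nat_fact of_nat_mult)
  also have "\<dots> \<le> fact m * (real n)^(n-m)"
  proof (rule mult_left_mono)
    show "real (fact n div fact m) \<le> real n ^ (n - m)" using d
      by (metis of_nat_le_iff of_nat_power)
  qed simp
  finally have "(fact n :: real) \<le> fact m * (real n)^(n-m)" .
  then have "(real n)^m * fact n \<le> (real n)^m * (fact m * (real n)^(n-m))"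
    by (intro mult_left_mono) simp_all
  also have "\<dots> = fact m * (real n)^n"
    using assms by (simp add: power_add[symmetric] algebra_simps)
  finally show ?thesis .
qed
lemma E_sum:
  "(\<Sum>m\<le>n. R^(n-m) * real (n choose m) * (fact m / fact n)) = (\<Sum>j\<le>n. R^j / fact j)"
proof -
  have "(\<Sum>m\<le>n. R^(n-m) * real (n choose m) * (fact m / fact n)) = (\<Sum>m\<le>n. R^(n-m) / fact (n-m))"
    by (intro sum.cong refl) (simp add: binomial_fact)
  also have "\<dots> = (\<Sum>j\<le>n. R^j / fact j)"
    unfolding atMost_atLeast0 by (subst sum.atLeastAtMost_rev) simp
  finally show ?thesis .
qed

lemma B_sum:
  assumes "n \<ge> 1"
  shows "(\<Sum>m\<le>n. R^(n-m) * real (n choose m) * ((real n)^m / (real n)^n)) = (1 + R / real n)^n"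
proof -
  have "(real n + R)^n = (\<Sum>m\<le>n. real (n choose m) * (real n)^m * R^(n-m))"
    by (rule binomial_ring)
  then have "(real n + R)^n / (real n)^n = (\<Sum>m\<le>n. R^(n-m) * real (n choose m) * ((real n)^m / (real n)^n))"
    by (simp add: sum_divide_distrib algebra_simps)
  moreover have "(real n + R)^n / (real n)^n = (1 + R / real n)^n"
    using assms by (simp add: power_divide[symmetric] add_divide_distrib)
  ultimately show ?thesis by simp
qed

lemma poly_sum_upto:
  fixes p :: "complex poly"
  assumes "degree p \<le> N" shows "poly p x = (\<Sum>i\<le>N. coeff p i * x ^ i)"
proof -
  have "poly p x = (\<Sum>i\<le>degree p. coeff p i * x ^ i)" by (rule poly_altdef)
  also have "\<dots> = (\<Sum>i\<le>N. coeff p i * x ^ i)"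
    using assms by (intro sum.mono_neutral_left) (auto simp: coeff_eq_0)
  finally show ?thesis .
qed

lemma Tn_lower:
  assumes mesh: "is_mesh (th n) n" and z: "z \<noteq> 0" "norm z \<le> R" and nR: "R < real n"
  shows "norm (Tn (th n) n z) / fact n \<ge> (1 - R / real n)^n - ((\<Sum>j\<le>n. R^j / fact j) - (1 + R / real n)^n)"
proof -
  let ?om = "om (th n) n"
  have n1: "n \<ge> 1"
  proof -
    have "0 < norm z" using z(1) by simp
    then have "0 < real n" using z(2) nR by linarith
    then show ?thesis by simp
  qed
  obtain r where r: "\<And>m. coeff ?om m = complex_of_real (r m)" "\<And>m. 0 \<le> r m" "\<And>m. r m \<le> real (n choose m)"
  proof -
    obtain r where "\<forall>m. coeff ?om m = complex_of_real (r m) \<and> 0 \<le> r m \<and> r m \<le> real (n choose m)"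
      using choice[OF om_facts(3)[OF mesh]] by blast
    then show ?thesis using that by blast
  qed
  define W where "W = (\<Sum>m\<le>n. z^(n-m) * (of_nat n)^m * coeff ?om m)"
  have W: "W = (\<Prod>i\<in>{1..n}. (of_nat n - tt (th n) i * z))"
  proof -
    have "z^n * poly ?om (of_nat n / z) = (\<Sum>m\<le>n. z^n * (coeff ?om m * (of_nat n / z)^m))"
      by (simp add: poly_sum_upto[OF om_facts(1)[OF mesh]] sum_distrib_left)
    also have "\<dots> = W" unfolding W_def
    proof (intro sum.cong refl)
      fix m assume "m \<in> {..n}"
      then have "z^n = z^(n-m) * z^m" by (simp add: power_add[symmetric])
      then show "z^n * (coeff ?om m * (of_nat n / z)^m) = z^(n-m) * (of_nat n)^m * coeff ?om m"
        using z(1) by (simp add: power_divide)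
    qed
    finally have "W = z^n * poly ?om (of_nat n / z)" by simp
    also have "\<dots> = (\<Prod>i\<in>{1..n}. z) * (\<Prod>i\<in>{1..n}. (of_nat n / z - tt (th n) i))"
      by (simp add: om_def poly_prod)
    also have "\<dots> = (\<Prod>i\<in>{1..n}. (of_nat n - tt (th n) i * z))"
      unfolding prod.distrib[symmetric] using z(1) by (intro prod.cong refl) (simp add: right_diff_distrib)
    finally show ?thesis .
  qed
  have Wlow: "norm W \<ge> (real n - R)^n"
  proof -
    have "(real n - R)^n = (\<Prod>i\<in>{1..n}. real n - R)" by simp
    also have "\<dots> \<le> (\<Prod>i\<in>{1..n}. norm (of_nat n - tt (th n) i * z))"
    proof (intro prod_mono conjI)
      fix i assume i: "i \<in> {1..n}"
      show "0 \<le> real n - R" using nR by simp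
      have "norm (tt (th n) i * z) \<le> R"
      proof -
        have "\<bar>th n i\<bar> \<le> 1" using mesh_range[OF mesh, of i] i by auto
        then have "norm (tt (th n) i * z) \<le> 1 * norm z" using mult_right_mono[of "\<bar>th n i\<bar>" 1 "norm z"] by (simp add: norm_mult)
        then show ?thesis using z(2) by simp
      qed
      moreover have "norm (of_nat n :: complex) - norm (tt (th n) i * z) \<le> norm (of_nat n - tt (th n) i * z)"
        by (rule norm_triangle_ineq2)
      ultimately show "real n - R \<le> norm (of_nat n - tt (th n) i * z)" by simp
    qed
    also have "\<dots> = norm W" unfolding W by (simp add: prod_norm)
    finally show ?thesis .
  qed
  define d where "d m = fact m / fact n - (real n)^m / (real n)^n" for m
  have d0: "0 \<le> d m" if "m \<le> n" for m
  proof -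
    have "(real n)^m * fact n \<le> fact m * (real n)^n" by (rule fact_ratio[OF that])
    then have "(real n)^m / (real n)^n \<le> fact m / fact n" using n1
      by (simp add: divide_simps mult.commute)
    then show ?thesis by (simp add: d_def)
  qed
  have diff: "Tn (th n) n z / fact n - W / (of_nat n)^n = (\<Sum>m\<le>n. z^(n-m) * coeff ?om m * complex_of_real (d m))"
    unfolding Tn_coeff W_def d_def sum_divide_distrib sum_subtractf[symmetric]
    by (intro sum.cong refl) (simp add: algebra_simps diff_divide_distrib)
  have "norm (Tn (th n) n z / fact n - W / (of_nat n)^n) \<le> (\<Sum>m\<le>n. norm (z^(n-m) * coeff ?om m * complex_of_real (d m)))"
    unfolding diff by (rule norm_sum)
  also have "\<dots> \<le> (\<Sum>m\<le>n. R^(n-m) * real (n choose m) * d m)"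
  proof (intro sum_mono)
    fix m assume m: "m \<in> {..n}"
    have "norm (z^(n-m) * coeff ?om m * complex_of_real (d m)) = norm z^(n-m) * r m * d m"
      using r(1,2)[of m] d0[of m] m by (simp add: norm_mult norm_power)
    also have "\<dots> \<le> R^(n-m) * real (n choose m) * d m"
      using r(2,3)[of m] d0[of m] m z(2) order_trans[OF norm_ge_zero z(2)]
      by (intro mult_mono power_mono) (auto simp: zero_le_mult_iff)
    finally show "norm (z^(n-m) * coeff ?om m * complex_of_real (d m)) \<le> R^(n-m) * real (n choose m) * d m" .
  qed
  also have "\<dots> = (\<Sum>j\<le>n. R^j / fact j) - (1 + R / real n)^n"
    unfolding d_def right_diff_distrib sum_subtractf E_sum B_sum[OF n1] by simp
  finally have dn: "norm (Tn (th n) n z / fact n - W / (of_nat n)^n) \<le> (\<Sum>j\<le>n. R^j / fact j) - (1 + R / real n)^n" .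
  have "norm (W / (of_nat n)^n) \<ge> (1 - R / real n)^n"
  proof -
    have "(1 - R / real n)^n = (real n - R)^n / (real n)^n"
      using n1 by (simp add: power_divide[symmetric] diff_divide_distrib)
    also have "\<dots> \<le> norm W / (real n)^n" using Wlow by (intro divide_right_mono) simp_all
    also have "\<dots> = norm (W / (of_nat n)^n)" by (simp add: norm_divide norm_power)
    finally show ?thesis .
  qed
  moreover have "norm (W / (of_nat n)^n) - norm (Tn (th n) n z / fact n - W / (of_nat n)^n) \<le> norm (Tn (th n) n z / fact n)"
    using norm_triangle_ineq2[of "W / (of_nat n)^n" "Tn (th n) n z / fact n"]
      norm_minus_commute[of "W / (of_nat n)^n" "Tn (th n) n z / fact n"] by simp
  moreover have "norm (Tn (th n) n z / fact n) = norm (Tn (th n) n z) / fact n"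
    by (simp add: norm_divide)
  ultimately show ?thesis using dn by linarith
qed




lemma om_bound:
  assumes mesh: "is_mesh (th n) n" and s: "s \<in> {-1..0}"
  shows "norm (poly (om (th n) n) (complex_of_real s)) \<le> 1"
proof -
  have "norm (poly (om (th n) n) (complex_of_real s)) = (\<Prod>i\<in>{1..n}. norm (complex_of_real (s - th n i)))"
    unfolding om_def poly_prod prod_norm[symmetric] by simp
  also have "\<dots> \<le> 1"
  proof (rule prod_le_1)
    fix i assume i: "i \<in> {1..n}"
    have "-1 \<le> th n i" "th n i \<le> 0" using mesh_range[OF mesh, of i] i by auto
    then have "\<bar>s - th n i\<bar> \<le> 1" using s by auto
    then show "0 \<le> norm (complex_of_real (s - th n i)) \<and> norm (complex_of_real (s - th n i)) \<le> 1"
      by (simp only: norm_of_real) simp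
  qed
  finally show ?thesis .
qed

lemma err_bound:
  fixes p :: "complex poly"
  assumes mesh: "is_mesh (th n) n" and ode: "pderiv p - Polynomial.smult z p = Polynomial.smult c (om (th n) n)"
    and p0: "poly p 0 = 1" and x: "x \<in> {-1..0}"
  shows "norm (exp (z * complex_of_real x) - poly p (complex_of_real x)) \<le> exp (2 * norm z) * norm c"
proof -
  define S where "S = complex_of_real ` {-1..0}"
  define g where "g w = 1 - exp (- z * w) * poly p w" for w
  define g' where "g' w = - exp (- z * w) * (c * poly (om (th n) n) w)" for w
  have convS: "convex S" unfolding S_def
    by (rule convex_linear_image[OF bounded_linear.linear[OF bounded_linear_of_real]]) simp
  have pe: "poly (pderiv p) w - z * poly p w = c * poly (om (th n) n) w" for w
    using arg_cong[OF ode, of "\<lambda>q. poly q w"] by simp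
  have der: "(g has_field_derivative g' w) (at w within S)" for w
  proof -
    have "(g has_field_derivative (- (exp (- z * w) * (- z) * poly p w + exp (- z * w) * poly (pderiv p) w))) (at w)"
      unfolding g_def by (auto intro!: derivative_eq_intros)
    moreover have "- (exp (- z * w) * (- z) * poly p w + exp (- z * w) * poly (pderiv p) w) = g' w"
      unfolding g'_def pe[symmetric] by (simp add: algebra_simps)
    ultimately show ?thesis by (simp add: has_field_derivative_at_within)
  qed
  have bnd: "norm (g' w) \<le> exp (norm z) * norm c" if "w \<in> S" for w
  proof -
    obtain s where s: "s \<in> {-1..0}" "w = complex_of_real s" using \<open>w \<in> S\<close> unfolding S_def by auto
    have e: "norm (exp (- z * w)) \<le> exp (norm z)"
    proof -
      have "norm (- z * w) = norm z * \<bar>s\<bar>" using s by (simp add: norm_mult)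
      also have "\<dots> \<le> norm z * 1" using s by (intro mult_left_mono) auto
      finally have "norm (- z * w) \<le> norm z" by simp
      then show ?thesis using norm_exp[of "- z * w"] by (meson exp_le_cancel_iff order_trans)
    qed
    have "norm (g' w) = norm (exp (- z * w)) * (norm c * norm (poly (om (th n) n) w))"
      by (simp add: g'_def norm_mult)
    also have "\<dots> \<le> exp (norm z) * (norm c * 1)"
      using e om_bound[where th=th and n=n, OF mesh s(1)] s(2)
      by (intro mult_mono mult_left_mono) auto
    finally show ?thesis by simp
  qed
  have xS: "complex_of_real x \<in> S" "0 \<in> S" using x unfolding S_def by (auto intro: image_eqI[of 0 _ 0])
  have "norm (g (complex_of_real x) - g 0) \<le> exp (norm z) * norm c * norm (complex_of_real x - 0)"
    by (rule field_differentiable_bound[OF convS der bnd xS])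
  also have "\<dots> \<le> exp (norm z) * norm c * 1"
    using x by (intro mult_left_mono) auto
  finally have gb: "norm (g (complex_of_real x)) \<le> exp (norm z) * norm c" using p0 by (simp add: g_def)
  have "exp (z * complex_of_real x) - poly p (complex_of_real x) = exp (z * complex_of_real x) * g (complex_of_real x)"
    unfolding g_def using exp_minus_inverse[of "z * complex_of_real x"]
    by (simp add: algebra_simps)
  then have "norm (exp (z * complex_of_real x) - poly p (complex_of_real x))
      = norm (exp (z * complex_of_real x)) * norm (g (complex_of_real x))" by (simp add: norm_mult)
  also have "\<dots> \<le> exp (norm z) * (exp (norm z) * norm c)"
  proof (intro mult_mono gb)
    have "norm (z * complex_of_real x) = norm z * \<bar>x\<bar>" by (simp add: norm_mult)
    also have "\<dots> \<le> norm z * 1" using x by (intro mult_left_mono) auto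
    finally have "norm (z * complex_of_real x) \<le> norm z" by simp
    then show "norm (exp (z * complex_of_real x)) \<le> exp (norm z)"
      using norm_exp[of "z * complex_of_real x"] by (meson exp_le_cancel_iff order_trans)
  qed simp_all
  also have "\<dots> = (exp (norm z) * exp (norm z)) * norm c" by (simp only: mult.assoc)
  also have "exp (norm z) * exp (norm z) = exp (2 * norm z)" by (simp only: mult_2 exp_add)
  finally show ?thesis .
qed




lemma X_abs_le:
  assumes f: "f \<in> Xspace" and t: "t \<in> {-1..0}" shows "\<bar>f t\<bar> \<le> supnorm f"
proof -
  have c: "continuous_on {-1..0} (\<lambda>t. \<bar>f t\<bar>)"
    using f unfolding Xspace_def by (auto intro: continuous_intros)
  have "bounded ((\<lambda>t. \<bar>f t\<bar>) ` {-1..0})"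
    by (rule compact_imp_bounded[OF compact_continuous_image[OF c]]) simp
  then have "bdd_above ((\<lambda>t. \<bar>f t\<bar>) ` {-1..0})" by (rule bounded_imp_bdd_above)
  then show ?thesis unfolding supnorm_def using t by (rule cSUP_upper2) simp
qed

lemma supnorm_nonneg: assumes "f \<in> Xspace" shows "0 \<le> supnorm f"
proof -
  have "\<bar>f 0\<bar> \<le> supnorm f" using X_abs_le[OF assms, of 0] by simp
  then show ?thesis using abs_ge_zero[of "f 0"] by linarith
qed

lemma supnorm_le: assumes "\<forall>t\<in>{-1..0}. \<bar>f t\<bar> \<le> B" shows "supnorm f \<le> B"
  unfolding supnorm_def using assms by (intro cSUP_least) auto

lemma absM: assumes f: "f \<in> Xspace" shows "\<forall>f\<in>Xspace. \<bar>\<Phi> f\<bar> \<le> M * supnorm f \<Longrightarrow> \<bar>\<Phi> f\<bar> \<le> \<bar>M\<bar> * supnorm f"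
proof -
  assume a: "\<forall>f\<in>Xspace. \<bar>\<Phi> f\<bar> \<le> M * supnorm f"
  have "M * supnorm f \<le> \<bar>M\<bar> * supnorm f" by (rule mult_right_mono) (auto simp: supnorm_nonneg[OF f])
  then show ?thesis using a f by fastforce
qed

lemma bl_zero: assumes "bl_functional \<Phi>" shows "\<Phi> (\<lambda>t. 0) = 0"
proof -
  have z: "(\<lambda>t::real. 0::real) \<in> Xspace" by (simp add: Xspace_def)
  have h: "\<forall>c. \<forall>f\<in>Xspace. \<Phi> (\<lambda>t. c * f t) = c * \<Phi> f" using assms unfolding bl_functional_def by blast
  have "\<Phi> (\<lambda>t. 0 * 0) = 0 * \<Phi> (\<lambda>t. 0)" using bspec[OF spec[OF h, of 0] z] by simp
  then show ?thesis by simp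
qed

lemma bl_fnorm:
  assumes bl: "bl_functional \<Phi>" and f: "f \<in> Xspace"
  shows "\<bar>\<Phi> f\<bar> \<le> fnorm \<Phi> * supnorm f"
proof -
  obtain M where M: "\<forall>f\<in>Xspace. \<bar>\<Phi> f\<bar> \<le> M * supnorm f" using bl unfolding bl_functional_def by blast
  have bdd: "bdd_above ((\<lambda>f. \<bar>\<Phi> f\<bar>) ` {f\<in>Xspace. supnorm f \<le> 1})"
  proof (rule bdd_aboveI2)
    fix h assume h: "h \<in> {f\<in>Xspace. supnorm f \<le> 1}"
    then have "\<bar>\<Phi> h\<bar> \<le> M * supnorm h" using M by blast
    also have "\<dots> \<le> \<bar>M\<bar> * supnorm h" using supnorm_nonneg[of h] h by (intro mult_right_mono) auto
    also have "\<dots> \<le> \<bar>M\<bar> * 1" using h by (intro mult_left_mono) auto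
    finally show "\<bar>\<Phi> h\<bar> \<le> \<bar>M\<bar>" by simp
  qed
  define s where "s = supnorm f"
  have s0: "0 \<le> s" using supnorm_nonneg[OF f] by (simp add: s_def)
  show ?thesis
  proof (cases "s = 0")
    case True
    have "\<forall>t\<in>{-1..0}. f t = (\<lambda>t. 0) t"
    proof
      fix t :: real assume "t \<in> {-1..0}"
      then have "\<bar>f t\<bar> \<le> 0" using X_abs_le[OF f] True by (simp add: s_def)
      then show "f t = (\<lambda>t. 0) t" by simp
    qed
    moreover have "(\<lambda>t::real. 0::real) \<in> Xspace" by (simp add: Xspace_def)
    moreover have "\<forall>f\<in>Xspace. \<forall>g\<in>Xspace. (\<forall>t\<in>{-1..0}. f t = g t) \<longrightarrow> \<Phi> f = \<Phi> g"
      using bl unfolding bl_functional_def by blast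
    ultimately have "\<Phi> f = \<Phi> (\<lambda>t. 0)" using f by (meson bspec)
    then show ?thesis using bl_zero[OF bl] True by (simp add: s_def)
  next
    case False
    then have sp: "0 < s" using s0 by simp
    define g where "g t = (1 / s) * f t" for t
    have "continuous_on {-1..0} (\<lambda>t. f t / s)" using f sp unfolding Xspace_def
      by (intro continuous_on_divide continuous_on_const) auto
    then have gX: "g \<in> Xspace" unfolding Xspace_def g_def by simp
    have "supnorm g \<le> 1"
    proof (rule supnorm_le, intro ballI)
      fix t :: real assume t: "t \<in> {-1..0}"
      have "\<bar>g t\<bar> = \<bar>f t\<bar> / s" using sp by (simp add: g_def abs_mult)
      also have "\<dots> \<le> s / s" using X_abs_le[OF f t] sp by (intro divide_right_mono) (auto simp: s_def)
      finally show "\<bar>g t\<bar> \<le> 1" using sp by simp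
    qed
    then have gin: "g \<in> {f\<in>Xspace. supnorm f \<le> 1}" using gX by simp
    have "\<bar>\<Phi> g\<bar> \<le> fnorm \<Phi>" unfolding fnorm_def by (rule cSUP_upper[OF gin bdd])
    moreover have "\<Phi> g = (1 / s) * \<Phi> f"
    proof -
      have h: "\<forall>c. \<forall>f\<in>Xspace. \<Phi> (\<lambda>t. c * f t) = c * \<Phi> f" using bl unfolding bl_functional_def by blast
      show ?thesis using bspec[OF spec[OF h, of "1/s"] f] by (simp add: g_def[abs_def])
    qed
    ultimately have "\<bar>\<Phi> f\<bar> / s \<le> fnorm \<Phi>" using sp by (simp add: abs_mult)
    then show ?thesis using sp by (simp add: s_def divide_le_eq mult.commute)
  qed
qed

lemma bl_comb:
  assumes A: "bl_functional A" and B: "bl_functional B" and C: "bl_functional C"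
  shows "bl_functional (\<lambda>f. A f - B f - c * C f)"
proof -
  obtain MA where MA: "\<forall>f\<in>Xspace. \<bar>A f\<bar> \<le> MA * supnorm f" using A unfolding bl_functional_def by blast
  obtain MB where MB: "\<forall>f\<in>Xspace. \<bar>B f\<bar> \<le> MB * supnorm f" using B unfolding bl_functional_def by blast
  obtain MC where MC: "\<forall>f\<in>Xspace. \<bar>C f\<bar> \<le> MC * supnorm f" using C unfolding bl_functional_def by blast
  have bnd: "\<bar>A f - B f - c * C f\<bar> \<le> (\<bar>MA\<bar> + \<bar>MB\<bar> + \<bar>c\<bar> * \<bar>MC\<bar>) * supnorm f" if f: "f \<in> Xspace" for f
  proof -
    have s: "0 \<le> supnorm f" by (rule supnorm_nonneg[OF f])
    have a: "\<bar>A f\<bar> \<le> \<bar>MA\<bar> * supnorm f" using absM[OF f] MA f by blast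
    have b: "\<bar>B f\<bar> \<le> \<bar>MB\<bar> * supnorm f" using absM[OF f] MB f by blast
    have cc: "\<bar>C f\<bar> \<le> \<bar>MC\<bar> * supnorm f" using absM[OF f] MC f by blast
    have "\<bar>A f - B f - c * C f\<bar> \<le> \<bar>A f\<bar> + \<bar>B f\<bar> + \<bar>c\<bar> * \<bar>C f\<bar>" by (simp add: abs_mult[symmetric]) 
    also have "\<dots> \<le> \<bar>MA\<bar> * supnorm f + \<bar>MB\<bar> * supnorm f + \<bar>c\<bar> * (\<bar>MC\<bar> * supnorm f)"
      using a b cc by (intro add_mono mult_left_mono) auto
    finally show ?thesis by (simp add: algebra_simps)
  qed
  show ?thesis unfolding bl_functional_def
  proof (intro conjI ballI allI impI)
    fix f g assume fg: "f \<in> Xspace" "g \<in> Xspace"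
    have "A (\<lambda>t. f t + g t) = A f + A g" using A fg unfolding bl_functional_def by blast
    moreover have "B (\<lambda>t. f t + g t) = B f + B g" using B fg unfolding bl_functional_def by blast
    moreover have "C (\<lambda>t. f t + g t) = C f + C g" using C fg unfolding bl_functional_def by blast
    ultimately show "A (\<lambda>t. f t + g t) - B (\<lambda>t. f t + g t) - c * C (\<lambda>t. f t + g t) =
               A f - B f - c * C f + (A g - B g - c * C g)" by (simp add: algebra_simps)
  next
    fix d f assume f: "f \<in> Xspace"
    have "A (\<lambda>t. d * f t) = d * A f" using A f unfolding bl_functional_def by blast
    moreover have "B (\<lambda>t. d * f t) = d * B f" using B f unfolding bl_functional_def by blast
    moreover have "C (\<lambda>t. d * f t) = d * C f" using C f unfolding bl_functional_def by blast
    ultimately show "A (\<lambda>t. d * f t) - B (\<lambda>t. d * f t) - c * C (\<lambda>t. d * f t) = d * (A f - B f - c * C f)"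
      by (simp add: algebra_simps)
  next
    fix f g assume fg: "f \<in> Xspace" "g \<in> Xspace" "\<forall>t\<in>{-1..0}. f t = g t"
    have "A f = A g" using A fg unfolding bl_functional_def by blast
    moreover have "B f = B g" using B fg unfolding bl_functional_def by blast
    moreover have "C f = C g" using C fg unfolding bl_functional_def by blast
    ultimately show "A f - B f - c * C f = A g - B g - c * C g" by simp
  next
    show "\<exists>M. \<forall>f\<in>Xspace. \<bar>A f - B f - c * C f\<bar> \<le> M * supnorm f" using bnd by blast
  qed
qed

lemma local_bound:
  assumes L: "Ck_family k L" and k: "0 < k"
  shows "\<exists>d>0. \<exists>M\<ge>0. \<forall>\<beta>. \<bar>\<beta> - \<alpha>\<bar> < d \<longrightarrow> (\<forall>f\<in>Xspace. \<bar>L \<beta> f\<bar> \<le> M * supnorm f)"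
proof -
  obtain Ls where Ls0: "Ls 0 = L" and bl: "\<forall>j\<le>k. \<forall>\<alpha>. bl_functional (Ls j \<alpha>)"
    and der: "\<forall>j<k. \<forall>\<alpha>. ((\<lambda>\<beta>. fnorm (\<lambda>f. Ls j \<beta> f - Ls j \<alpha> f - (\<beta> - \<alpha>) * Ls (Suc j) \<alpha> f)
                              / \<bar>\<beta> - \<alpha>\<bar>) \<longlongrightarrow> 0) (at \<alpha>)"
    using L unfolding Ck_family_def by blast
  have bl0: "bl_functional (L \<beta>)" for \<beta> using bl Ls0 by auto
  have bl1: "bl_functional (Ls (Suc 0) \<alpha>)" using bl k by (simp add: Suc_le_eq)
  have lim: "((\<lambda>\<beta>. fnorm (\<lambda>f. L \<beta> f - L \<alpha> f - (\<beta> - \<alpha>) * Ls (Suc 0) \<alpha> f) / \<bar>\<beta> - \<alpha>\<bar>) \<longlongrightarrow> 0) (at \<alpha>)"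
    using der k Ls0 by auto
  have "eventually (\<lambda>\<beta>. fnorm (\<lambda>f. L \<beta> f - L \<alpha> f - (\<beta> - \<alpha>) * Ls (Suc 0) \<alpha> f) / \<bar>\<beta> - \<alpha>\<bar> < 1) (at \<alpha>)"
    using order_tendstoD(2)[OF lim] by simp
  then obtain d where d: "d > 0" and dP: "\<And>\<beta>. \<beta> \<noteq> \<alpha> \<Longrightarrow> dist \<beta> \<alpha> < d \<Longrightarrow>
      fnorm (\<lambda>f. L \<beta> f - L \<alpha> f - (\<beta> - \<alpha>) * Ls (Suc 0) \<alpha> f) / \<bar>\<beta> - \<alpha>\<bar> < 1"
    unfolding eventually_at by blast
  obtain Ma where Ma: "\<forall>f\<in>Xspace. \<bar>L \<alpha> f\<bar> \<le> Ma * supnorm f" using bl0[of \<alpha>] unfolding bl_functional_def by blast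
  obtain M1 where M1: "\<forall>f\<in>Xspace. \<bar>Ls (Suc 0) \<alpha> f\<bar> \<le> M1 * supnorm f" using bl1 unfolding bl_functional_def by blast
  define M where "M = \<bar>Ma\<bar> + \<bar>M1\<bar> + 1"
  have "0 < min d 1" using d by simp
  moreover have "\<forall>\<beta>. \<bar>\<beta> - \<alpha>\<bar> < min d 1 \<longrightarrow> (\<forall>f\<in>Xspace. \<bar>L \<beta> f\<bar> \<le> M * supnorm f)"
  proof (intro allI impI ballI)
    fix \<beta> f assume b: "\<bar>\<beta> - \<alpha>\<bar> < min d 1" and f: "f \<in> Xspace"
    have s: "0 \<le> supnorm f" by (rule supnorm_nonneg[OF f])
    have a: "\<bar>L \<alpha> f\<bar> \<le> \<bar>Ma\<bar> * supnorm f" using absM[OF f] Ma f by blast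
    have a1: "\<bar>Ls (Suc 0) \<alpha> f\<bar> \<le> \<bar>M1\<bar> * supnorm f" using absM[OF f] M1 f by blast
    show "\<bar>L \<beta> f\<bar> \<le> M * supnorm f"
    proof (cases "\<beta> = \<alpha>")
      case True
      then show ?thesis using a s by (auto simp: M_def intro: order_trans[OF _ mult_right_mono])
    next
      case False
      define D where "D = (\<lambda>f. L \<beta> f - L \<alpha> f - (\<beta> - \<alpha>) * Ls (Suc 0) \<alpha> f)"
      have blD: "bl_functional D" unfolding D_def by (rule bl_comb[OF bl0 bl0 bl1])
      have "fnorm D / \<bar>\<beta> - \<alpha>\<bar> < 1" using dP[OF False] b by (simp add: D_def dist_real_def)
      then have "fnorm D < \<bar>\<beta> - \<alpha>\<bar>" using False by (simp add: divide_less_eq)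
      then have fD: "fnorm D \<le> 1" using b by simp
      have Df: "\<bar>D f\<bar> \<le> 1 * supnorm f"
        using bl_fnorm[OF blD f] mult_right_mono[OF fD s] by linarith
      have "\<bar>L \<beta> f\<bar> \<le> \<bar>L \<alpha> f\<bar> + \<bar>\<beta> - \<alpha>\<bar> * \<bar>Ls (Suc 0) \<alpha> f\<bar> + \<bar>D f\<bar>"
        unfolding D_def by (simp add: abs_mult[symmetric])
      also have "\<dots> \<le> \<bar>Ma\<bar> * supnorm f + 1 * (\<bar>M1\<bar> * supnorm f) + 1 * supnorm f"
        using a a1 Df b by (intro add_mono mult_mono) auto
      finally show ?thesis by (simp add: M_def algebra_simps)
    qed
  qed
  moreover have "0 \<le> M" by (simp add: M_def)
  ultimately show ?thesis by blast
qed

lemma uniform_bound: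
  assumes L: "Ck_family k L" and k: "0 < k" and K: "compact K"
  shows "\<exists>M\<ge>0. \<forall>\<beta>\<in>K. \<forall>f\<in>Xspace. \<bar>L \<beta> f\<bar> \<le> M * supnorm f"
proof -
  have ex1: "\<forall>\<alpha>. \<exists>d. d > 0 \<and> (\<exists>M\<ge>0. \<forall>\<beta>. \<bar>\<beta> - \<alpha>\<bar> < d \<longrightarrow> (\<forall>f\<in>Xspace. \<bar>L \<beta> f\<bar> \<le> M * supnorm f))"
    using local_bound[OF L k] by blast
  obtain dd where dd: "\<forall>\<alpha>. dd \<alpha> > 0 \<and> (\<exists>M\<ge>0. \<forall>\<beta>. \<bar>\<beta> - \<alpha>\<bar> < dd \<alpha> \<longrightarrow> (\<forall>f\<in>Xspace. \<bar>L \<beta> f\<bar> \<le> M * supnorm f))"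
    using choice[OF ex1] by blast
  then have ex2: "\<forall>\<alpha>. \<exists>M. M \<ge> 0 \<and> (\<forall>\<beta>. \<bar>\<beta> - \<alpha>\<bar> < dd \<alpha> \<longrightarrow> (\<forall>f\<in>Xspace. \<bar>L \<beta> f\<bar> \<le> M * supnorm f))"
    by blast
  obtain MM where MM: "\<forall>\<alpha>. MM \<alpha> \<ge> 0 \<and> (\<forall>\<beta>. \<bar>\<beta> - \<alpha>\<bar> < dd \<alpha> \<longrightarrow> (\<forall>f\<in>Xspace. \<bar>L \<beta> f\<bar> \<le> MM \<alpha> * supnorm f))"
    using choice[OF ex2] by blast
  have cov: "K \<subseteq> \<Union> ((\<lambda>\<alpha>. ball \<alpha> (dd \<alpha>)) ` K)"
    using dd by force
  obtain F where F: "F \<subseteq> K" "finite F" "K \<subseteq> \<Union> ((\<lambda>\<alpha>. ball \<alpha> (dd \<alpha>)) ` F)"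
    using compactE_image[OF K _ cov] by blast
  show ?thesis
  proof (intro exI[of _ "sum MM F"] conjI ballI)
    show "0 \<le> sum MM F" using MM by (simp add: sum_nonneg)
    fix \<beta> f assume b: "\<beta> \<in> K" and f: "f \<in> Xspace"
    obtain \<alpha> where a: "\<alpha> \<in> F" "\<beta> \<in> ball \<alpha> (dd \<alpha>)" using F(3) b by blast
    have "\<bar>\<beta> - \<alpha>\<bar> < dd \<alpha>" using a(2) by (simp add: dist_real_def abs_minus_commute)
    then have "\<bar>L \<beta> f\<bar> \<le> MM \<alpha> * supnorm f" using MM f by blast
    also have "\<dots> \<le> sum MM F * supnorm f"
      using a(1) F(2) MM supnorm_nonneg[OF f] by (intro mult_right_mono member_le_sum) auto
    finally show "\<bar>L \<beta> f\<bar> \<le> sum MM F * supnorm f" .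
  qed
qed

lemma cext_bound:
  assumes bl: "bl_functional \<Phi>" and M: "M \<ge> 0" "\<forall>f\<in>Xspace. \<bar>\<Phi> f\<bar> \<le> M * supnorm f"
    and g: "continuous_on {-1..0} g" and h: "continuous_on {-1..0} h"
    and B: "\<forall>t\<in>{-1..0}. norm (g t - h t) \<le> B"
  shows "norm (cext \<Phi> g - cext \<Phi> h) \<le> 2 * M * B"
proof -
  have part: "\<bar>\<Phi> (\<lambda>t. P (g t)) - \<Phi> (\<lambda>t. P (h t))\<bar> \<le> M * B"
    if P: "\<And>w. \<bar>P w\<bar> \<le> norm w" "\<And>u w. P u - P w = P (u - w)" "continuous_on UNIV P" for P :: "complex \<Rightarrow> real"
  proof -
    have Pg: "(\<lambda>t. P (g t)) \<in> Xspace" "(\<lambda>t. P (h t)) \<in> Xspace"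
      unfolding Xspace_def using g h P(3)
      by (auto intro!: continuous_on_compose2[of UNIV P])
    have dX: "(\<lambda>t. P (g t) - P (h t)) \<in> Xspace" using Pg unfolding Xspace_def by (auto intro: continuous_intros)
    have "\<Phi> (\<lambda>t. (P (g t) - P (h t)) + P (h t)) = \<Phi> (\<lambda>t. P (g t) - P (h t)) + \<Phi> (\<lambda>t. P (h t))"
    proof -
      have ad: "\<forall>f\<in>Xspace. \<forall>g\<in>Xspace. \<Phi> (\<lambda>t. f t + g t) = \<Phi> f + \<Phi> g"
        using bl unfolding bl_functional_def by blast
      show ?thesis using bspec[OF bspec[OF ad dX] Pg(2)] by simp
    qed
    then have e: "\<Phi> (\<lambda>t. P (g t)) - \<Phi> (\<lambda>t. P (h t)) = \<Phi> (\<lambda>t. P (g t) - P (h t))" by simp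
    have "supnorm (\<lambda>t. P (g t) - P (h t)) \<le> B"
    proof (rule supnorm_le, intro ballI)
      fix t :: real assume t: "t \<in> {-1..0}"
      have "\<bar>P (g t) - P (h t)\<bar> = \<bar>P (g t - h t)\<bar>" by (simp add: P(2))
      also have "\<dots> \<le> norm (g t - h t)" by (rule P(1))
      also have "\<dots> \<le> B" using B t by blast
      finally show "\<bar>P (g t) - P (h t)\<bar> \<le> B" .
    qed
    then have "M * supnorm (\<lambda>t. P (g t) - P (h t)) \<le> M * B" using M(1) by (simp add: mult_left_mono)
    then show ?thesis unfolding e using M(2) dX by (meson order_trans)
  qed
  have re: "\<bar>\<Phi> (\<lambda>t. Re (g t)) - \<Phi> (\<lambda>t. Re (h t))\<bar> \<le> M * B"
    by (rule part) (auto simp: abs_Re_le_cmod intro: continuous_intros)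
  have im: "\<bar>\<Phi> (\<lambda>t. Im (g t)) - \<Phi> (\<lambda>t. Im (h t))\<bar> \<le> M * B"
    by (rule part) (auto simp: abs_Im_le_cmod intro: continuous_intros)
  have "cext \<Phi> g - cext \<Phi> h = complex_of_real (\<Phi> (\<lambda>t. Re (g t)) - \<Phi> (\<lambda>t. Re (h t)))
        + \<i> * complex_of_real (\<Phi> (\<lambda>t. Im (g t)) - \<Phi> (\<lambda>t. Im (h t)))"
    unfolding cext_def by (simp add: algebra_simps)
  also have "norm \<dots> \<le> \<bar>\<Phi> (\<lambda>t. Re (g t)) - \<Phi> (\<lambda>t. Re (h t))\<bar> + \<bar>\<Phi> (\<lambda>t. Im (g t)) - \<Phi> (\<lambda>t. Im (h t))\<bar>"
    by (rule order_trans[OF norm_triangle_ineq]) (simp add: norm_mult of_real_diff[symmetric] del: of_real_diff)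
  also have "\<dots> \<le> 2 * M * B" using re im by simp
  finally show ?thesis .
qed




lemma pow_fact_exp: assumes "0 \<le> (x::real)" shows "x^n / fact n \<le> exp x"
proof -
  have s: "summable (\<lambda>n. x^n / fact n)" using exp_converges[of x] by (simp add: sums_summable divide_inverse_commute)
  have "x^n / fact n = (\<Sum>i\<in>{n}. x^i / fact i)" by simp
  also have "\<dots> \<le> (\<Sum>i. x^i / fact i)" by (rule sum_le_suminf[OF s]) (use assms in auto)
  also have "\<dots> = exp x" using exp_converges[of x] by (simp add: sums_iff divide_inverse_commute)
  finally show ?thesis .
qed
lemma E_lim: "(\<lambda>n. (\<Sum>j\<le>n. R^j / fact j)) \<longlonglongrightarrow> exp (R::real)"
proof -
  have "(\<lambda>n. \<Sum>j<n. R^j / fact j) \<longlonglongrightarrow> exp R" using exp_converges[of R] by (simp add: sums_def divide_inverse_commute)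
  then have "(\<lambda>n. \<Sum>j<Suc n. R^j / fact j) \<longlonglongrightarrow> exp R" by (rule LIMSEQ_Suc)
  then show ?thesis by (simp add: lessThan_Suc_atMost)
qed

theorem corollary5p2:
  fixes th :: "nat \<Rightarrow> nat \<Rightarrow> real"
    and L :: "real \<Rightarrow> (real \<Rightarrow> real) \<Rightarrow> real"
    and k :: nat
    and U :: "(complex \<times> real) set"
  assumes mesh: "\<forall>n. is_mesh (th n) n"
    and assmA: "(\<lambda>n. lebesgue_red th n / real n) \<longlonglongrightarrow> 0"
    and k: "k \<ge> 3"
    and L: "Ck_family k L"
    and U: "compact U"
  shows "\<exists>C>0. \<forall>\<^sub>F n in sequentially. \<forall>(z, \<alpha>)\<in>U.
           mat_invertible n (shifted th n z) \<and>
           cmod (Delta0 L z \<alpha> - Deltan th L n z \<alpha>) < 1 / sqrt (real n) * (C / real n) ^ n"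
proof -
  obtain a where a: "\<forall>x\<in>U. norm x \<le> a" using compact_imp_bounded[OF U] unfolding bounded_iff by blast
  define R where "R = max a 1"
  have R1: "1 \<le> R" by (simp add: R_def)
  have zR: "norm z \<le> R" if "(z, \<alpha>) \<in> U" for z \<alpha>
    using a that norm_fst_le[of z \<alpha>] unfolding R_def by force
  have K: "compact (snd ` U)" by (rule compact_continuous_image[OF continuous_on_snd[OF continuous_on_id] U])
  obtain M where M: "M \<ge> 0" "\<forall>\<beta>\<in>snd ` U. \<forall>f\<in>Xspace. \<bar>L \<beta> f\<bar> \<le> M * supnorm f"
    using uniform_bound[OF L _ K] k by auto
  have blL: "bl_functional (L \<beta>)" for \<beta>
    using L unfolding Ck_family_def by (metis le0)
  define \<delta> where "\<delta> = exp (- R) / 2"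
  have \<delta>0: "0 < \<delta>" by (simp add: \<delta>_def)
  define E where "E n = (\<Sum>j\<le>n. R^j / fact j)" for n
  define K0 where "K0 = 2 * M * exp (2 * R) * R / \<delta>"
  define C where "C = 2 * exp 1 * R"
  have C0: "C > 0" using R1 by (simp add: C_def)
  have ev1: "eventually (\<lambda>n. R < real n) sequentially" by real_asymp
  have ev2: "eventually (\<lambda>n. \<delta> < (1 - R / real n)^n - (E n - (1 + R / real n)^n)) sequentially"
  proof -
    have l1: "(\<lambda>n. (1 - R / real n)^n) \<longlonglongrightarrow> exp (- R)"
      using tendsto_exp_limit_sequentially[of "- R"] by simp
    have l2: "(\<lambda>n. E n - (1 + R / real n)^n) \<longlonglongrightarrow> exp R - exp R"
      unfolding E_def by (intro tendsto_diff E_lim tendsto_exp_limit_sequentially)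
    have "(\<lambda>n. (1 - R / real n)^n - (E n - (1 + R / real n)^n)) \<longlonglongrightarrow> exp (- R) - (exp R - exp R)"
      by (intro tendsto_diff l1 l2)
    then have "(\<lambda>n. (1 - R / real n)^n - (E n - (1 + R / real n)^n)) \<longlonglongrightarrow> exp (- R)" by simp
    moreover have "\<delta> < exp (- R)" by (simp add: \<delta>_def)
    ultimately show ?thesis by (rule order_tendstoD(1))
  qed
  have ev3: "eventually (\<lambda>n. K0 < 2^n / sqrt (real n)) sequentially"
  proof -
    have "filterlim (\<lambda>n::nat. 2^n / sqrt (real n)) at_top sequentially" by real_asymp
    then show ?thesis by (simp add: filterlim_at_top_dense)
  qed
  have main: "mat_invertible n (shifted th n z) \<and>
           cmod (Delta0 L z \<alpha> - Deltan th L n z \<alpha>) < 1 / sqrt (real n) * (C / real n) ^ n"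
    if n1: "R < real n" and n2: "\<delta> < (1 - R / real n)^n - (E n - (1 + R / real n)^n)"
      and n3: "K0 < 2^n / sqrt (real n)" and za: "(z, \<alpha>) \<in> U" for n z \<alpha>
  proof -
    have mn: "is_mesh (th n) n" using mesh by blast
    have nz: "norm z \<le> R" using zR[OF za] .
    have npos: "0 < real n" using n1 R1 by linarith
    have Tlow: "\<delta> * fact n \<le> norm (Tn (th n) n z)" if "z \<noteq> 0"
    proof -
      have "\<delta> \<le> norm (Tn (th n) n z) / fact n"
        using Tn_lower[where th=th and n=n and z=z and R=R, OF mn that nz n1] n2 unfolding E_def by linarith
      then show ?thesis by (simp add: divide_simps)
    qed
    have zT: "z = 0 \<or> Tn (th n) n z \<noteq> 0"
    proof (cases "z = 0")
      case False
      have "0 < \<delta> * fact n" using \<delta>0 by simp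
      then show ?thesis using Tlow[OF False] by auto
    qed simp
    note mf = main_fixed_n[where th=th and n=n and z=z, OF mn zT]
    define p where "p = psol th n z"
    have pin_eq: "pin th n z = (\<lambda>x. poly p (complex_of_real x))" using mf(2) by (auto simp: p_def)
    define B where "B = exp (2 * R) * R^Suc n / (\<delta> * fact n)"
    have B0: "0 \<le> B" using R1 \<delta>0 by (simp add: B_def)
    have errB: "\<forall>t\<in>{-1..0}. norm (pin th n z t - expf z t) \<le> B"
    proof
      fix t :: real assume t: "t \<in> {-1..0}"
      show "norm (pin th n z t - expf z t) \<le> B"
      proof (cases "z = 0")
        case True
        have "pin th n z t = 1" unfolding pin_eq p_def psol_def using True by simp
        then show ?thesis using B0 True by (simp add: expf_def)
      next
        case False
        define c where "c = - (z^Suc n) / Tn (th n) n z"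
        have ode: "pderiv p - Polynomial.smult z p = Polynomial.smult c (om (th n) n)"
          using psol_facts(3)[where th=th and n=n and z=z, OF mn zT] False by (simp add: p_def c_def)
        have p0: "poly p 0 = 1" using psol_facts(2)[where th=th and n=n and z=z, OF mn zT] by (simp add: p_def)
        have e: "norm (exp (z * complex_of_real t) - poly p (complex_of_real t)) \<le> exp (2 * norm z) * norm c"
          by (rule err_bound[where th=th and n=n, OF mn ode p0 t])
        have "norm c = norm z ^ Suc n / norm (Tn (th n) n z)" by (simp only: c_def norm_divide norm_minus_cancel norm_power)
        also have "\<dots> \<le> R ^ Suc n / (\<delta> * fact n)"
          using Tlow[OF False] \<delta>0 nz R1 by (intro frac_le power_mono) auto
        finally have cb: "norm c \<le> R ^ Suc n / (\<delta> * fact n)" .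
        have "exp (2 * norm z) * norm c \<le> exp (2 * R) * (R ^ Suc n / (\<delta> * fact n))"
          using nz cb by (intro mult_mono) auto
        then have "norm (exp (z * complex_of_real t) - poly p (complex_of_real t)) \<le> B"
          using e by (simp add: B_def)
        then show ?thesis by (simp add: pin_eq expf_def norm_minus_commute)
      qed
    qed
    have a\<alpha>: "\<alpha> \<in> snd ` U" using za by force
    have cb: "norm (cext (L \<alpha>) (pin th n z) - cext (L \<alpha>) (expf z)) \<le> 2 * M * B"
    proof (rule cext_bound[OF blL M(1)])
      show "\<forall>f\<in>Xspace. \<bar>L \<alpha> f\<bar> \<le> M * supnorm f" using M(2) a\<alpha> by blast
      show "continuous_on {-1..0} (pin th n z)" unfolding pin_eq by (intro continuous_intros)
      show "continuous_on {-1..0} (expf z)" unfolding expf_def by (intro continuous_intros)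
      show "\<forall>t\<in>{-1..0}. norm (pin th n z t - expf z t) \<le> B" by (rule errB)
    qed
    have dd: "Delta0 L z \<alpha> - Deltan th L n z \<alpha> = cext (L \<alpha>) (pin th n z) - cext (L \<alpha>) (expf z)"
      by (simp add: Delta0_def Deltan_def)
    have "2 * M * B = K0 * (R^n / fact n)"
      using \<delta>0 by (simp add: B_def K0_def field_simps)
    also have "\<dots> \<le> K0 * ((exp 1 * R)^n / (real n)^n)"
    proof (rule mult_left_mono)
      have "real n ^ n / fact n \<le> exp (real n)" by (rule pow_fact_exp) simp
      then have "1 / fact n \<le> exp (real n) / (real n)^n" using npos by (simp add: divide_simps)
      then have "R^n * (1 / fact n) \<le> R^n * (exp (real n) / (real n)^n)"
        using R1 by (intro mult_left_mono) auto
      moreover have "exp (real n) = exp 1 ^ n" by (simp add: exp_of_nat_mult[symmetric])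
      ultimately show "R^n / fact n \<le> (exp 1 * R)^n / (real n)^n" by (simp add: power_mult_distrib mult.commute)
      show "0 \<le> K0" using M(1) R1 \<delta>0 by (simp add: K0_def)
    qed
    also have "\<dots> < 2^n / sqrt (real n) * ((exp 1 * R)^n / (real n)^n)"
      using n3 R1 npos by (intro mult_strict_right_mono) auto
    also have "\<dots> = 1 / sqrt (real n) * (C / real n) ^ n"
      by (simp add: C_def power_divide power_mult_distrib)
    finally have "2 * M * B < 1 / sqrt (real n) * (C / real n) ^ n" .
    then show ?thesis using mf(1) cb dd by simp
  qed
  show ?thesis
  proof (intro exI[of _ C] conjI C0)
    show "\<forall>\<^sub>F n in sequentially. \<forall>(z, \<alpha>)\<in>U. mat_invertible n (shifted th n z) \<and>
           cmod (Delta0 L z \<alpha> - Deltan th L n z \<alpha>) < 1 / sqrt (real n) * (C / real n) ^ n"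
      using eventually_conj[OF ev1 eventually_conj[OF ev2 ev3]]
      by eventually_elim (use main in blast)
  qed
qed


end
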